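(* Let $(\Omega,\mathcal{F},\mathbb{P})$ be a complete probability space, $t_0<T$, $x_0$ a random variable and $a$ a stochastic process on $[t_0,T]$, and let $x(t,\omega)=x_0(\omega)\mathrm{e}^{\int_{t_0}^t a(s,\omega)\mathrm{d} s}$. Assume: (H1) $a\in \mathrm{L}^2([t_0,T]\times\Omega)$; (H2) for every $N\ge1$, $x_0$ and $(\xi_1,\ldots,\xi_N)$ are absolutely continuous and independent; (H3) the density $f_0$ of $x_0$ is continuous and bounded on $D(x_0)$; (H4) there is a constant $C$ with $\|\mathrm{e}^{-K_a(t,\pmb{\xi}_N)}\|_{\mathrm{L}^2(\Omega)}\le C$ for all $N\ge1$ and $t\in[t_0,T]$. Then for all $x\in\mathbb{R}$ and $t\in[t_0,T]$, the sequence \[ f_1^N(x,t)=\int_{\mathbb{R}^N} f_0\big(x\,\mathrm{e}^{-K_a(t,\pmb{\xi}_N)}\big)f_{\pmb{\xi}_N}(\pmb{\xi}_N)\,\mathrm{e}^{-K_a(t,\pmb{\xi}_N)}\,\mathrm{d}\pmb{\xi}_N \] converges to $f_1(x,t)$, where $f_1(\cdot,t)$ is a probability density of $x(t,\cdot)$.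
   Context: Karhunen–Loève expansion: for $a\in \mathrm{L}^2([t_0,T]\times\Omega)$ write $a(t,\omega)=\mu_a(t)+\sum_{j=1}^\infty\sqrt{\nu_j}\,\phi_j(t)\xi_j(\omega)$ (convergence in $\mathrm{L}^2([t_0,T]\times\Omega)$), where $\mu_a(t)=\mathbb{E}[a(t)]$, $\{(\nu_j,\phi_j)\}$ are the (nonnegative) eigenvalue/eigenfunction pairs of the covariance operator $\mathcal{C}f(t)=\int_{t_0}^T\mathrm{Cov}[a(t),a(s)]f(s)\,\mathrm{d} s$ on $\mathrm{L}^2([t_0,T])$ with $\{\phi_j\}$ an orthonormal basis, and $\xi_j$ are zero-mean, unit-variance, pairwise uncorrelated random variables; pairs may be enumerated in any order, and if only finitely many eigenvalues are nonzero, vectors stop at that number. $\pmb{\xi}_N=(\xi_1,\ldots,\xi_N)$, $f_{\pmb{\xi}_N}$ its density, $K_a(t,\pmb{\xi}_N)=\int_{t_0}^t\big(\mu_a(s)+\sum_{j=1}^N\sqrt{\nu_j}\phi_j(s)\xi_j\big)\mathrm{d} s$. $D(x_0)=(0,\infty)$ if $x_0>0$ a.s., $D(x_0)=(-\infty,0)$ if $x_0<0$ a.s., and $D(x_0)=\mathbb{R}$ otherwise. *)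

theory Defs
  imports "HOL-Probability.Probability"
begin

definition sqint :: "'a measure \<Rightarrow> ('a \<Rightarrow> real) \<Rightarrow> bool" where
  "sqint N f \<longleftrightarrow> f \<in> borel_measurable N \<and> integrable N (\<lambda>x. (f x)^2)"

definition Tm :: "real \<Rightarrow> real \<Rightarrow> real measure" where
  "Tm t0 T = restrict_space lborel {t0..T}"

definition mean_fun :: "'a measure \<Rightarrow> (real \<Rightarrow> 'a \<Rightarrow> real) \<Rightarrow> real \<Rightarrow> real" where
  "mean_fun M a t = integral\<^sup>L M (a t)"

definition cov_fun :: "'a measure \<Rightarrow> (real \<Rightarrow> 'a \<Rightarrow> real) \<Rightarrow> real \<Rightarrow> real \<Rightarrow> real" where
  "cov_fun M a t s = integral\<^sup>L M (\<lambda>\<omega>. a t \<omega> * a s \<omega>) - mean_fun M a t * mean_fun M a s"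

definition cov_op :: "'a measure \<Rightarrow> (real \<Rightarrow> 'a \<Rightarrow> real) \<Rightarrow> real \<Rightarrow> real \<Rightarrow> (real \<Rightarrow> real) \<Rightarrow> real \<Rightarrow> real" where
  "cov_op M a t0 T f t = (LINT s:{t0..T}|lborel. cov_fun M a t s * f s)"

definition Dset :: "'a measure \<Rightarrow> ('a \<Rightarrow> real) \<Rightarrow> real set" where
  "Dset M x0 = (if (AE \<omega> in M. 0 < x0 \<omega>) then {0<..}
                else if (AE \<omega> in M. x0 \<omega> < 0) then {..<0} else UNIV)"

text \<open>R^N, realised as the product of N copies of Lebesgue measure indexed by {0..<N}
  (extensional functions nat => real).\<close>
definition RN :: "nat \<Rightarrow> (nat \<Rightarrow> real) measure" where
  "RN N = PiM {..<N} (\<lambda>_. lborel)"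

text \<open>The random vector xi_N = (xi_0, ..., xi_{N-1}) (0-based indexing).\<close>
definition xivec :: "(nat \<Rightarrow> 'a \<Rightarrow> real) \<Rightarrow> nat \<Rightarrow> 'a \<Rightarrow> (nat \<Rightarrow> real)" where
  "xivec \<xi> N \<omega> = restrict (\<lambda>j. \<xi> j \<omega>) {..<N}"

definition Ka :: "(real \<Rightarrow> real) \<Rightarrow> (nat \<Rightarrow> real) \<Rightarrow> (nat \<Rightarrow> real \<Rightarrow> real) \<Rightarrow> real \<Rightarrow> nat
                   \<Rightarrow> real \<Rightarrow> (nat \<Rightarrow> real) \<Rightarrow> real" where
  "Ka mu \<nu> \<phi> t0 N t v = (LINT s:{t0..t}|lborel. mu s + (\<Sum>j<N. sqrt (\<nu> j) * \<phi> j s * v j))"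

definition f1N :: "(real \<Rightarrow> real) \<Rightarrow> ((nat \<Rightarrow> real) \<Rightarrow> real) \<Rightarrow> (real \<Rightarrow> real) \<Rightarrow> (nat \<Rightarrow> real)
                   \<Rightarrow> (nat \<Rightarrow> real \<Rightarrow> real) \<Rightarrow> real \<Rightarrow> nat \<Rightarrow> real \<Rightarrow> real \<Rightarrow> real" where
  "f1N f0 fxi mu \<nu> \<phi> t0 N x t =
     integral\<^sup>L (RN N) (\<lambda>v. f0 (x * exp (- Ka mu \<nu> \<phi> t0 N t v)) * fxi v * exp (- Ka mu \<nu> \<phi> t0 N t v))"

text \<open>Truncation index: the vectors stop at L when only L eigenvalues are nonzero.\<close>
definition trunc_idx :: "enat \<Rightarrow> nat \<Rightarrow> nat" where
  "trunc_idx L n = (case L of enat m \<Rightarrow> min (Suc n) m | \<infinity> \<Rightarrow> Suc n)"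

end

theory Submission
  imports Defs
begin

lemma abs_le_1_sq: "\<bar>y::real\<bar> \<le> 1 + y^2"
proof (cases "\<bar>y\<bar> \<le> 1")
  case True then show ?thesis by (smt (verit) zero_le_power2)
next
  case False
  then have "\<bar>y\<bar> * 1 \<le> \<bar>y\<bar> * \<bar>y\<bar>" by (intro mult_left_mono) auto
  then show ?thesis by (simp add: power2_eq_square abs_mult_self_eq)
qed

lemma sq_integrable_imp_integrable:
  fixes f :: "'a \<Rightarrow> real"
  assumes "finite_measure N" "f \<in> borel_measurable N" "integrable N (\<lambda>x. (f x)^2)"
  shows "integrable N f"
proof -
  interpret finite_measure N by fact
  have "integrable N (\<lambda>x. 1 + (f x)^2)" using assms by auto
  moreover have "norm (f x) \<le> 1 + (f x)^2" for x
    using abs_le_1_sq[of "f x"] by simp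
  ultimately show ?thesis
    by (intro Bochner_Integration.integrable_bound[OF _ assms(2)]) (auto intro!: AE_I2)
qed

lemma cs_finite:
  fixes f :: "'a \<Rightarrow> real"
  assumes fm: "finite_measure N" and m: "f \<in> borel_measurable N" and i2: "integrable N (\<lambda>x. (f x)^2)"
  shows "(integral\<^sup>L N f)^2 \<le> measure N (space N) * integral\<^sup>L N (\<lambda>x. (f x)^2)"
proof -
  interpret finite_measure N by fact
  have i1: "integrable N f" using sq_integrable_imp_integrable[OF assms] .
  define m where "m = measure N (space N)"
  define I where "I = integral\<^sup>L N f"
  define J where "J = integral\<^sup>L N (\<lambda>x. (f x)^2)"
  have J0: "0 \<le> J" unfolding J_def by simp
  show ?thesis
  proof (cases "m = 0")
    case True
    then have "emeasure N (space N) = 0" by (simp add: m_def emeasure_eq_measure)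
    then have "AE x in N. False"
      by (intro AE_I'[of "space N"]) (auto simp: null_sets_def)
    then have "I = 0" unfolding I_def by (subst integral_eq_zero_AE) auto
    then show ?thesis using True J0 by (simp add: m_def[symmetric] I_def[symmetric] J_def[symmetric])
  next
    case False
    then have mpos: "m > 0" unfolding m_def using measure_nonneg[of N "space N"] by linarith
    define c where "c = I / m"
    have "0 \<le> integral\<^sup>L N (\<lambda>x. (f x - c)^2)" by simp
    also have "integral\<^sup>L N (\<lambda>x. (f x - c)^2) = integral\<^sup>L N (\<lambda>x. (f x)^2 - 2 * c * f x + c^2)"
      by (simp add: power2_diff algebra_simps)
    also have "\<dots> = J - 2 * c * I + c^2 * m"
      using i1 i2 by (simp add: J_def I_def m_def)
    finally have "0 \<le> J - 2 * c * I + c^2 * m" .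
    then have "0 \<le> J - I^2 / m" using mpos by (simp add: c_def power2_eq_square field_simps)
    then show ?thesis using mpos by (simp add: m_def[symmetric] I_def[symmetric] J_def[symmetric] field_simps)
  qed
qed

lemma subseq_principle:
  fixes x :: "nat \<Rightarrow> real"
  assumes "\<And>s::nat\<Rightarrow>nat. strict_mono s \<Longrightarrow> \<exists>r::nat\<Rightarrow>nat. strict_mono r \<and> (\<lambda>n. x (s (r n))) \<longlonglongrightarrow> l"
  shows "x \<longlonglongrightarrow> l"
proof (rule ccontr)
  assume "\<not> x \<longlonglongrightarrow> l"
  then have "\<not> (\<forall>e>0. \<exists>no. \<forall>n\<ge>no. dist (x n) l < e)" unfolding LIMSEQ_def by simp
  then obtain e where e: "e > 0" and fr: "\<forall>no. \<exists>n\<ge>no. \<not> dist (x n) l < e"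
    by blast
  have "infinite {n. \<not> dist (x n) l < e}"
    unfolding infinite_nat_iff_unbounded_le using fr by blast
  from infinite_enumerate[OF this] obtain s :: "nat \<Rightarrow> nat" where
    s: "strict_mono s" "\<And>n. s n \<in> {n. \<not> dist (x n) l < e}"
    by blast
  from assms[OF s(1)] obtain r where r: "strict_mono r" "(\<lambda>n. x (s (r n))) \<longlonglongrightarrow> l" by blast
  then obtain n where "dist (x (s (r n))) l < e" using e unfolding LIMSEQ_def by auto
  with s(2)[of "r n"] show False by simp
qed

lemma abs_le_min_sq:
  fixes h R :: real assumes "R > 0"
  shows "\<bar>h\<bar> \<le> min \<bar>h\<bar> R + h^2 / R"
proof (cases "\<bar>h\<bar> \<le> R")
  case True then show ?thesis using assms by (simp add: min_def)
next
  case False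
  then have "\<bar>h\<bar> * R \<le> \<bar>h\<bar> * \<bar>h\<bar>" by (intro mult_left_mono) auto
  then have "\<bar>h\<bar> \<le> h^2 / R" using assms by (simp add: field_simps power2_eq_square abs_mult_self_eq)
  then show ?thesis using False assms by (simp add: min_def)
qed

lemma fatou_exp:
  fixes K :: "nat \<Rightarrow> 'a \<Rightarrow> real"
  assumes [measurable]: "\<And>n. K n \<in> borel_measurable M" "K' \<in> borel_measurable M"
    and lim: "AE \<omega> in M. (\<lambda>n. K n \<omega>) \<longlonglongrightarrow> K' \<omega>"
    and int: "\<And>n. integrable M (\<lambda>\<omega>. (exp (- K n \<omega>))^2)"
    and bd: "\<And>n. integral\<^sup>L M (\<lambda>\<omega>. (exp (- K n \<omega>))^2) \<le> C"
  shows "integrable M (\<lambda>\<omega>. (exp (- K' \<omega>))^2) \<and> integral\<^sup>L M (\<lambda>\<omega>. (exp (- K' \<omega>))^2) \<le> C"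
proof -
  have "0 \<le> integral\<^sup>L M (\<lambda>\<omega>. (exp (- K 0 \<omega>))^2)" by (rule integral_nonneg_AE) auto
  then have C0: "0 \<le> C" using bd[of 0] by linarith
  have "(\<integral>\<^sup>+ \<omega>. ennreal ((exp (- K' \<omega>))^2) \<partial>M) = (\<integral>\<^sup>+ \<omega>. liminf (\<lambda>n. ennreal ((exp (- K n \<omega>))^2)) \<partial>M)"
  proof (intro nn_integral_cong_AE, use lim in eventually_elim)
    case (elim \<omega>)
    have "(\<lambda>n. ennreal ((exp (- K n \<omega>))^2)) \<longlonglongrightarrow> ennreal ((exp (- K' \<omega>))^2)"
      by (intro tendsto_ennrealI tendsto_intros elim)
    then show ?case by (metis lim_imp_Liminf trivial_limit_sequentially)
  qed
  also have "\<dots> \<le> liminf (\<lambda>n. \<integral>\<^sup>+ \<omega>. ennreal ((exp (- K n \<omega>))^2) \<partial>M)"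
    by (rule nn_integral_liminf) measurable
  also have "\<dots> = liminf (\<lambda>n. ennreal (integral\<^sup>L M (\<lambda>\<omega>. (exp (- K n \<omega>))^2)))"
    using int by (subst nn_integral_eq_integral) auto
  also have "\<dots> \<le> liminf (\<lambda>n. ennreal C)"
    by (intro Liminf_mono always_eventually allI ennreal_leI bd)
  also have "\<dots> = ennreal C" by (simp add: Liminf_const)
  finally have le: "(\<integral>\<^sup>+ \<omega>. ennreal ((exp (- K' \<omega>))^2) \<partial>M) \<le> ennreal C" .
  have i: "integrable M (\<lambda>\<omega>. (exp (- K' \<omega>))^2)"
    by (rule integrableI_nonneg) (use le in \<open>auto simp: top_unique[symmetric] intro: le_less_trans\<close>)
  moreover have "ennreal (integral\<^sup>L M (\<lambda>\<omega>. (exp (- K' \<omega>))^2)) \<le> ennreal C"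
    using le i by (subst (asm) nn_integral_eq_integral) auto
  then have "integral\<^sup>L M (\<lambda>\<omega>. (exp (- K' \<omega>))^2) \<le> C" using C0 by (simp add: ennreal_le_iff)
  ultimately show ?thesis by blast
qed

lemma integrable_g_exp:
  fixes g :: "real \<Rightarrow> real" and F :: "'a \<Rightarrow> real"
  assumes "finite_measure M" and [measurable]: "F \<in> borel_measurable M" "g \<in> borel_measurable borel"
    and "integrable M (\<lambda>\<omega>. (exp (- F \<omega>))^2)" and gb: "\<And>k. \<bar>g k\<bar> \<le> B * exp (- k)"
  shows "integrable M (\<lambda>\<omega>. g (F \<omega>))"
proof -
  interpret finite_measure M by fact
  have B0: "0 \<le> B" using gb[of 0] by simp
  have i1: "integrable M (\<lambda>\<omega>. B * (1 + (exp (- F \<omega>))^2))" using assms(4) by auto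
  moreover have bnd: "norm (g (F \<omega>)) \<le> norm (B * (1 + (exp (- F \<omega>))^2))" for \<omega>
  proof -
    have "norm (g (F \<omega>)) \<le> B * exp (- F \<omega>)" using gb by simp
    also have "\<dots> \<le> B * (1 + (exp (- F \<omega>))^2)"
      using abs_le_1_sq[of "exp (- F \<omega>)"] B0 by (intro mult_left_mono) auto
    also have "\<dots> = norm (B * (1 + (exp (- F \<omega>))^2))" using B0 by (simp add: abs_mult)
    finally show ?thesis .
  qed
  show ?thesis
    by (rule Bochner_Integration.integrable_bound[OF i1 measurable_compose[OF assms(2) assms(3)] AE_I2[OF bnd]])
qed

lemma conv_ae:
  fixes K :: "nat \<Rightarrow> 'a \<Rightarrow> real" and g :: "real \<Rightarrow> real"
  assumes P: "prob_space M"
    and [measurable]: "\<And>n. K n \<in> borel_measurable M" "K' \<in> borel_measurable M"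
    and lim: "AE \<omega> in M. (\<lambda>n. K n \<omega>) \<longlonglongrightarrow> K' \<omega>"
    and int: "\<And>n. integrable M (\<lambda>\<omega>. (exp (- K n \<omega>))^2)"
    and bd: "\<And>n. integral\<^sup>L M (\<lambda>\<omega>. (exp (- K n \<omega>))^2) \<le> C"
    and g: "continuous_on UNIV g" and gb: "\<And>k. \<bar>g k\<bar> \<le> B * exp (- k)"
  shows "(\<lambda>n. integral\<^sup>L M (\<lambda>\<omega>. g (K n \<omega>))) \<longlonglongrightarrow> integral\<^sup>L M (\<lambda>\<omega>. g (K' \<omega>))"
proof -
  interpret prob_space M by fact
  have fK: "integrable M (\<lambda>\<omega>. (exp (- K' \<omega>))^2)" "integral\<^sup>L M (\<lambda>\<omega>. (exp (- K' \<omega>))^2) \<le> C"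
    using fatou_exp[OF assms(2,3) lim int bd] by auto
  have gm[measurable]: "g \<in> borel_measurable borel" using g by (rule borel_measurable_continuous_onI)
  have B0: "0 \<le> B" using gb[of 0] by simp
  have "0 \<le> integral\<^sup>L M (\<lambda>\<omega>. (exp (- K 0 \<omega>))^2)" by (rule integral_nonneg_AE) auto
  then have C0: "0 \<le> C" using bd[of 0] by linarith
  have igK: "integrable M (\<lambda>\<omega>. g (K n \<omega>))" for n
    by (rule integrable_g_exp[OF _ _ gm int gb]) (auto intro: finite_measure_axioms)
  have igK': "integrable M (\<lambda>\<omega>. g (K' \<omega>))"
    by (rule integrable_g_exp[OF _ _ gm fK(1) gb]) (auto intro: finite_measure_axioms)
  define h where "h n \<omega> = g (K n \<omega>) - g (K' \<omega>)" for n \<omega>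
  have hm[measurable]: "h n \<in> borel_measurable M" for n unfolding h_def by measurable
  have sqb: "(g k)^2 \<le> B^2 * (exp (- k))^2" for k
  proof -
    have "\<bar>g k\<bar>^2 \<le> (B * exp (- k))^2" using gb[of k] by (intro power_mono) auto
    then show ?thesis by (simp add: power_mult_distrib)
  qed
  have h2bd: "(h n \<omega>)^2 \<le> 2 * B^2 * (exp (- K n \<omega>))^2 + 2 * B^2 * (exp (- K' \<omega>))^2" for n \<omega>
  proof -
    have "(h n \<omega>)^2 \<le> 2 * (g (K n \<omega>))^2 + 2 * (g (K' \<omega>))^2"
      unfolding h_def by (smt (verit) zero_le_power2 power2_diff power2_sum)
    then show ?thesis using sqb[of "K n \<omega>"] sqb[of "K' \<omega>"] by linarith
  qed
  have ih2: "integrable M (\<lambda>\<omega>. (h n \<omega>)^2)" for n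
  proof (rule Bochner_Integration.integrable_bound[OF _ _ AE_I2])
    show "integrable M (\<lambda>\<omega>. 2 * B^2 * (exp (- K n \<omega>))^2 + 2 * B^2 * (exp (- K' \<omega>))^2)"
      using int[of n] fK(1) by auto
    show "norm ((h n \<omega>)^2) \<le> norm (2 * B^2 * (exp (- K n \<omega>))^2 + 2 * B^2 * (exp (- K' \<omega>))^2)" for \<omega>
      using h2bd[of n \<omega>] by simp
  qed simp
  have ih: "integrable M (h n)" for n unfolding h_def using igK igK' by auto
  have int_h2: "integral\<^sup>L M (\<lambda>\<omega>. (h n \<omega>)^2) \<le> 4 * B^2 * C" for n
  proof -
    have "integral\<^sup>L M (\<lambda>\<omega>. (h n \<omega>)^2) \<le> integral\<^sup>L M (\<lambda>\<omega>. 2 * B^2 * (exp (- K n \<omega>))^2 + 2 * B^2 * (exp (- K' \<omega>))^2)"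
      using int[of n] fK(1) ih2 h2bd by (intro integral_mono) auto
    also have "\<dots> = 2 * B^2 * integral\<^sup>L M (\<lambda>\<omega>. (exp (- K n \<omega>))^2) + 2 * B^2 * integral\<^sup>L M (\<lambda>\<omega>. (exp (- K' \<omega>))^2)"
      using int[of n] fK(1) by simp
    also have "\<dots> \<le> 2 * B^2 * C + 2 * B^2 * C"
      using bd[of n] fK(2) by (intro add_mono mult_left_mono) auto
    finally show ?thesis by (simp add: algebra_simps)
  qed
  have h0: "AE \<omega> in M. (\<lambda>n. h n \<omega>) \<longlonglongrightarrow> 0"
    using lim
  proof eventually_elim
    case (elim \<omega>)
    have "isCont g (K' \<omega>)" using g by (simp add: continuous_on_eq_continuous_at)
    then have "(\<lambda>n. g (K n \<omega>)) \<longlonglongrightarrow> g (K' \<omega>)" using elim by (rule isCont_tendsto_compose)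
    then have "(\<lambda>n. g (K n \<omega>) - g (K' \<omega>)) \<longlonglongrightarrow> g (K' \<omega>) - g (K' \<omega>)" by (intro tendsto_intros)
    then show ?case by (simp add: h_def)
  qed
  have dc: "(\<lambda>n. integral\<^sup>L M (\<lambda>\<omega>. min \<bar>h n \<omega>\<bar> R)) \<longlonglongrightarrow> 0" if R: "R > 0" for R
  proof -
    have "(\<lambda>n. integral\<^sup>L M (\<lambda>\<omega>. min \<bar>h n \<omega>\<bar> R)) \<longlonglongrightarrow> integral\<^sup>L M (\<lambda>\<omega>. 0)"
    proof (rule integral_dominated_convergence[where w="\<lambda>_. R"])
      show "AE \<omega> in M. (\<lambda>n. min \<bar>h n \<omega>\<bar> R) \<longlonglongrightarrow> 0"
        using h0
      proof eventually_elim
        case (elim \<omega>)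
        then have "(\<lambda>n. min \<bar>h n \<omega>\<bar> R) \<longlonglongrightarrow> min \<bar>0\<bar> R" by (intro tendsto_intros)
        then show ?case using R by simp
      qed
      show "AE \<omega> in M. norm (min \<bar>h n \<omega>\<bar> R) \<le> R" for n using R by auto
    qed (simp_all add: hm)
    then show ?thesis by simp
  qed
  show ?thesis
  proof (rule LIMSEQ_I)
    fix e :: real assume e: "0 < e"
    define R where "R = 8 * B^2 * C / e + 1"
    have "0 \<le> 8 * B^2 * C / e" using e C0 by simp
    then have R0: "R > 0" unfolding R_def by linarith
    have small: "4 * B^2 * C / R < e / 2"
    proof -
      have "8 * B^2 * C < e * R" unfolding R_def using e by (simp add: field_simps)
      then show ?thesis using R0 by (simp add: field_simps)
    qed
    obtain no where no: "\<And>n. n \<ge> no \<Longrightarrow> norm (integral\<^sup>L M (\<lambda>\<omega>. min \<bar>h n \<omega>\<bar> R) - 0) < e / 2"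
      using LIMSEQ_D[OF dc[OF R0], of "e/2"] e by auto
    show "\<exists>no. \<forall>n\<ge>no. norm (integral\<^sup>L M (\<lambda>\<omega>. g (K n \<omega>)) - integral\<^sup>L M (\<lambda>\<omega>. g (K' \<omega>))) < e"
    proof (intro exI allI impI)
      fix n assume n: "no \<le> n"
      have im: "integrable M (\<lambda>\<omega>. min \<bar>h n \<omega>\<bar> R)"
        by (rule Bochner_Integration.integrable_bound[where f="\<lambda>_. R"]) (auto intro!: AE_I2 simp: hm)
      have "norm (integral\<^sup>L M (\<lambda>\<omega>. g (K n \<omega>)) - integral\<^sup>L M (\<lambda>\<omega>. g (K' \<omega>))) = \<bar>integral\<^sup>L M (h n)\<bar>"
        unfolding h_def using igK igK' by simp
      also have "\<dots> \<le> integral\<^sup>L M (\<lambda>\<omega>. \<bar>h n \<omega>\<bar>)" by (rule integral_abs_bound)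
      also have "\<dots> \<le> integral\<^sup>L M (\<lambda>\<omega>. min \<bar>h n \<omega>\<bar> R + (h n \<omega>)^2 / R)"
        using ih[of n] im ih2[of n] abs_le_min_sq[OF R0] by (intro integral_mono) auto
      also have "\<dots> = integral\<^sup>L M (\<lambda>\<omega>. min \<bar>h n \<omega>\<bar> R) + integral\<^sup>L M (\<lambda>\<omega>. (h n \<omega>)^2) / R"
        using im ih2[of n] by simp
      also have "\<dots> < e / 2 + e / 2"
      proof (rule add_less_le_mono)
        show "integral\<^sup>L M (\<lambda>\<omega>. min \<bar>h n \<omega>\<bar> R) < e / 2" using no[OF n] by simp
        have "integral\<^sup>L M (\<lambda>\<omega>. (h n \<omega>)^2) / R \<le> 4 * B^2 * C / R"
          using int_h2[of n] R0 by (simp add: divide_right_mono)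
        then show "integral\<^sup>L M (\<lambda>\<omega>. (h n \<omega>)^2) / R \<le> e / 2" using small by linarith
      qed
      finally show "norm (integral\<^sup>L M (\<lambda>\<omega>. g (K n \<omega>)) - integral\<^sup>L M (\<lambda>\<omega>. g (K' \<omega>))) < e" by simp
    qed
  qed
qed

lemma ae_subseq:
  fixes K :: "nat \<Rightarrow> 'a \<Rightarrow> real"
  assumes [measurable]: "\<And>n. K n \<in> borel_measurable M" "K' \<in> borel_measurable M"
    and i: "\<And>n. integrable M (\<lambda>\<omega>. (K n \<omega> - K' \<omega>)^2)"
    and l: "(\<lambda>n. integral\<^sup>L M (\<lambda>\<omega>. (K n \<omega> - K' \<omega>)^2)) \<longlonglongrightarrow> 0"
  shows "\<exists>r. strict_mono r \<and> (AE \<omega> in M. (\<lambda>n. K (r n) \<omega>) \<longlonglongrightarrow> K' \<omega>)"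
proof -
  have "(\<lambda>n. integral\<^sup>L M (\<lambda>\<omega>. norm ((K n \<omega> - K' \<omega>)^2))) \<longlonglongrightarrow> 0" using l by simp
  from tendsto_L1_AE_subseq[OF i this] obtain r where r: "strict_mono r"
    "AE \<omega> in M. (\<lambda>n. (K (r n) \<omega> - K' \<omega>)^2) \<longlonglongrightarrow> 0" by blast
  have "AE \<omega> in M. (\<lambda>n. K (r n) \<omega>) \<longlonglongrightarrow> K' \<omega>"
    using r(2)
  proof eventually_elim
    case (elim \<omega>)
    then have "(\<lambda>n. sqrt ((K (r n) \<omega> - K' \<omega>)^2)) \<longlonglongrightarrow> sqrt 0" by (intro tendsto_intros)
    then have "(\<lambda>n. \<bar>K (r n) \<omega> - K' \<omega>\<bar>) \<longlonglongrightarrow> 0" by simp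
    then have "(\<lambda>n. K (r n) \<omega> - K' \<omega>) \<longlonglongrightarrow> 0" by (rule tendsto_rabs_zero_cancel)
    then have "(\<lambda>n. (K (r n) \<omega> - K' \<omega>) + K' \<omega>) \<longlonglongrightarrow> 0 + K' \<omega>" by (intro tendsto_intros)
    then show ?case by simp
  qed
  with r(1) show ?thesis by blast
qed


lemma conv_L2:
  fixes K :: "nat \<Rightarrow> 'a \<Rightarrow> real" and g :: "real \<Rightarrow> real"
  assumes P: "prob_space M"
    and [measurable]: "\<And>n. K n \<in> borel_measurable M" "K' \<in> borel_measurable M"
    and i: "\<And>n. integrable M (\<lambda>\<omega>. (K n \<omega> - K' \<omega>)^2)"
    and l: "(\<lambda>n. integral\<^sup>L M (\<lambda>\<omega>. (K n \<omega> - K' \<omega>)^2)) \<longlonglongrightarrow> 0"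
    and int: "\<And>n. integrable M (\<lambda>\<omega>. (exp (- K n \<omega>))^2)"
    and bd: "\<And>n. integral\<^sup>L M (\<lambda>\<omega>. (exp (- K n \<omega>))^2) \<le> C"
    and g: "continuous_on UNIV g" and gb: "\<And>k. \<bar>g k\<bar> \<le> B * exp (- k)"
  shows "(\<lambda>n. integral\<^sup>L M (\<lambda>\<omega>. g (K n \<omega>))) \<longlonglongrightarrow> integral\<^sup>L M (\<lambda>\<omega>. g (K' \<omega>))"
proof (rule subseq_principle)
  fix s :: "nat \<Rightarrow> nat" assume s: "strict_mono s"
  have "(\<lambda>n. integral\<^sup>L M (\<lambda>\<omega>. (K (s n) \<omega> - K' \<omega>)^2)) \<longlonglongrightarrow> 0"
    using LIMSEQ_subseq_LIMSEQ[OF l s] by (simp add: comp_def)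
  from ae_subseq[of "\<lambda>n. K (s n)" M K', OF assms(2) assms(3) i this] obtain r where r: "strict_mono r"
    "AE \<omega> in M. (\<lambda>n. K (s (r n)) \<omega>) \<longlonglongrightarrow> K' \<omega>" by blast
  have "(\<lambda>n. integral\<^sup>L M (\<lambda>\<omega>. g (K (s (r n)) \<omega>))) \<longlonglongrightarrow> integral\<^sup>L M (\<lambda>\<omega>. g (K' \<omega>))"
    by (rule conv_ae[of M "\<lambda>n. K (s (r n))" K', OF P assms(2) assms(3) r(2) int bd g gb])
  with r(1) show "\<exists>r. strict_mono r \<and> (\<lambda>n. integral\<^sup>L M (\<lambda>\<omega>. g (K (s (r n)) \<omega>))) \<longlonglongrightarrow> integral\<^sup>L M (\<lambda>\<omega>. g (K' \<omega>))"
    by blast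
qed

lemma sqint_add:
  assumes "sqint N f" "sqint N g" shows "sqint N (\<lambda>x. f x + g x)"
proof -
  have [measurable]: "f \<in> borel_measurable N" "g \<in> borel_measurable N" using assms by (auto simp: sqint_def)
  have i: "integrable N (\<lambda>x. 2 * (f x)^2 + 2 * (g x)^2)" using assms by (auto simp: sqint_def)
  have ab: "(u + v)^2 \<le> 2 * (u^2) + 2 * (v^2)" for u v :: real
  proof -
    have "(u+v)^2 + (u-v)^2 = 2 * (u^2) + 2 * (v^2)" by (simp add: power2_sum power2_diff)
    moreover have "0 \<le> (u-v)^2" by simp
    ultimately show ?thesis by linarith
  qed
  have b: "norm ((f x + g x)^2) \<le> norm (2 * (f x)^2 + 2 * (g x)^2)" for x
    using ab[of "f x" "g x"] by simp
  show ?thesis unfolding sqint_def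
    by (rule conjI, measurable, rule Bochner_Integration.integrable_bound[OF i _ AE_I2[OF b]]) measurable
qed

lemma sqint_cmult:
  assumes "sqint N f" shows "sqint N (\<lambda>x. c * f x)"
  using assms by (auto simp: sqint_def power_mult_distrib)

lemma sqint_uminus:
  assumes "sqint N f" shows "sqint N (\<lambda>x. - f x)"
  using assms by (auto simp: sqint_def)

lemma sqint_diff:
  assumes "sqint N f" "sqint N g" shows "sqint N (\<lambda>x. f x - g x)"
  using sqint_add[OF assms(1) sqint_uminus[OF assms(2)]] by simp

lemma sqint_sum:
  assumes "finite I" "\<And>i. i \<in> I \<Longrightarrow> sqint N (f i)" shows "sqint N (\<lambda>x. \<Sum>i\<in>I. f i x)"
  using assms
proof (induction I rule: finite_induct)
  case empty then show ?case by (simp add: sqint_def)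
next
  case (insert i I)
  then show ?case by (simp add: sqint_add)
qed

lemma Tm_space: "space (Tm t0 T) = {t0..T}" by (simp add: Tm_def space_restrict_space)

lemma Tm_emeasure: "emeasure (Tm t0 T) (space (Tm t0 T)) = ennreal (T - t0)"
  unfolding Tm_space unfolding Tm_def by (subst emeasure_restrict_space) (auto simp: emeasure_lborel_Icc_eq ennreal_neg)

lemma Tm_finite: "finite_measure (Tm t0 T)"
  by (rule finite_measureI) (simp add: Tm_emeasure)

lemma Tm_measure: "t0 \<le> T \<Longrightarrow> measure (Tm t0 T) (space (Tm t0 T)) = T - t0"
  unfolding measure_def by (simp add: Tm_emeasure)

lemma Tm_ind_meas[measurable]: "(\<lambda>s. indicator {t0..t} s :: real) \<in> borel_measurable (Tm t0 T)"
  unfolding Tm_def by (rule measurable_restrict_space1) simp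

lemma Tm_set_integral:
  fixes f :: "real \<Rightarrow> real"
  assumes "t0 \<le> t" "t \<le> T"
  shows "(LINT s:{t0..t}|lborel. f s) = integral\<^sup>L (Tm t0 T) (\<lambda>s. indicator {t0..t} s * f s)"
proof -
  have "integral\<^sup>L (Tm t0 T) (\<lambda>s. indicator {t0..t} s * f s)
      = integral\<^sup>L lborel (\<lambda>s. indicator {t0..T} s *\<^sub>R (indicator {t0..t} s * f s))"
    unfolding Tm_def by (subst integral_restrict_space) simp_all
  also have "\<dots> = integral\<^sup>L lborel (\<lambda>s. indicator {t0..t} s *\<^sub>R f s)"
    using assms by (intro Bochner_Integration.integral_cong refl) (simp add: indicator_def)
  finally show ?thesis by (simp add: set_lebesgue_integral_def)
qed

lemma (in pair_sigma_finite) integrable_prod_fun: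
  fixes F :: "_ \<Rightarrow> real" and G :: "_ \<Rightarrow> real"
  assumes iF: "integrable M1 F" and iG: "integrable M2 G"
  shows "integrable (M1 \<Otimes>\<^sub>M M2) (\<lambda>x. F (fst x) * G (snd x))"
proof -
  have [measurable]: "F \<in> borel_measurable M1" "G \<in> borel_measurable M2"
    using iF iG by (auto dest: borel_measurable_integrable)
  show ?thesis
  proof (rule Fubini_integrable)
    show "(\<lambda>x. F (fst x) * G (snd x)) \<in> borel_measurable (M1 \<Otimes>\<^sub>M M2)" by measurable
    have "integrable M1 (\<lambda>x. \<bar>F x\<bar> * (\<integral>y. \<bar>G y\<bar> \<partial>M2))"
      using iF by (intro integrable_mult_left) auto
    then show "integrable M1 (\<lambda>x. \<integral>y. norm (F (fst (x, y)) * G (snd (x, y))) \<partial>M2)"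
      by (simp add: abs_mult)
    show "AE x in M1. integrable M2 (\<lambda>y. F (fst (x, y)) * G (snd (x, y)))"
      using iG by simp
  qed
qed

locale thm7 =
  fixes M :: "'a measure" and t0 T :: real and x0 :: "'a \<Rightarrow> real"
    and a :: "real \<Rightarrow> 'a \<Rightarrow> real"
    and L :: enat and \<nu> :: "nat \<Rightarrow> real" and \<phi> :: "nat \<Rightarrow> real \<Rightarrow> real"
    and \<xi> :: "nat \<Rightarrow> 'a \<Rightarrow> real"
    and f0 :: "real \<Rightarrow> real" and fxi :: "nat \<Rightarrow> (nat \<Rightarrow> real) \<Rightarrow> real"
  assumes prob: "prob_space M" and compl: "complete_measure M"
    and tT: "t0 < T"
    and H1: "sqint (Tm t0 T \<Otimes>\<^sub>M M) (\<lambda>(t, \<omega>). a t \<omega>)"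
    \<comment> \<open>Karhunen-Loeve data: the nonzero eigenpairs, indexed by j < L\<close>
    and KL_eig: "\<And>j. enat j < L \<Longrightarrow> sqint (Tm t0 T) (\<phi> j) \<and> 0 < \<nu> j \<and>
                    (AE t in Tm t0 T. cov_op M a t0 T (\<phi> j) t = \<nu> j * \<phi> j t)"
    and KL_orth: "\<And>i j. enat i < L \<Longrightarrow> enat j < L \<Longrightarrow>
                    integral\<^sup>L (Tm t0 T) (\<lambda>t. \<phi> i t * \<phi> j t) = (if i = j then 1 else 0)"
    and KL_compl: "\<And>f. sqint (Tm t0 T) f \<Longrightarrow>
                    (\<forall>j. enat j < L \<longrightarrow> integral\<^sup>L (Tm t0 T) (\<lambda>t. f t * \<phi> j t) = 0) \<Longrightarrow>
                    (AE t in Tm t0 T. cov_op M a t0 T f t = 0)"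
    and KL_xi: "\<And>j. enat j < L \<Longrightarrow> sqint M (\<xi> j) \<and> integral\<^sup>L M (\<xi> j) = 0 \<and>
                    integral\<^sup>L M (\<lambda>\<omega>. (\<xi> j \<omega>)^2) = 1"
    and KL_uncorr: "\<And>i j. enat i < L \<Longrightarrow> enat j < L \<Longrightarrow> i \<noteq> j \<Longrightarrow>
                    integral\<^sup>L M (\<lambda>\<omega>. \<xi> i \<omega> * \<xi> j \<omega>) = 0"
    and KL_conv: "(\<lambda>n. integral\<^sup>L (Tm t0 T \<Otimes>\<^sub>M M)
                    (\<lambda>(t, \<omega>). (a t \<omega> - mean_fun M a t
                       - (\<Sum>j\<in>{j. j < n \<and> enat j < L}. sqrt (\<nu> j) * \<phi> j t * \<xi> j \<omega>))^2))
                  \<longlonglongrightarrow> 0"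
    \<comment> \<open>(H2): absolute continuity (via densities) and independence\<close>
    and f0_dens: "distributed M lborel x0 (\<lambda>y. ennreal (f0 y))"
    and f0_nonneg: "\<And>y. 0 \<le> f0 y"
    and f0_out: "\<And>y. y \<notin> Dset M x0 \<Longrightarrow> f0 y = 0"
    and fxi_dens: "\<And>N. enat N \<le> L \<Longrightarrow>
                    distributed M (RN N) (xivec \<xi> N) (\<lambda>v. ennreal (fxi N v))"
    and fxi_nonneg: "\<And>N v. 0 \<le> fxi N v"
    and H2_indep: "\<And>N. 1 \<le> N \<Longrightarrow> enat N \<le> L \<Longrightarrow>
                    prob_space.indep_set M {x0 -` A \<inter> space M | A. A \<in> sets borel}
                      {xivec \<xi> N -` B \<inter> space M | B. B \<in> sets (RN N)}"
    and H3: "continuous_on (Dset M x0) f0" "bounded (f0 ` Dset M x0)"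
    and H4: "\<exists>C. \<forall>N t. 1 \<le> N \<longrightarrow> enat N \<le> L \<longrightarrow> t \<in> {t0..T} \<longrightarrow>
               integrable M (\<lambda>\<omega>. (exp (- Ka (mean_fun M a) \<nu> \<phi> t0 N t (xivec \<xi> N \<omega>)))^2) \<and>
               sqrt (integral\<^sup>L M (\<lambda>\<omega>. (exp (- Ka (mean_fun M a) \<nu> \<phi> t0 N t (xivec \<xi> N \<omega>)))^2)) \<le> C"

begin

definition "mu = mean_fun M a"
definition "Kf t \<omega> = (LINT s:{t0..t}|lborel. a s \<omega>)"
definition "tr n = trunc_idx L n"
definition "KN t n \<omega> = Ka mu \<nu> \<phi> t0 (tr n) t (xivec \<xi> (tr n) \<omega>)"
definition "cc t j = (LINT s:{t0..t}|lborel. \<phi> j s)"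
definition "c0 t = (LINT s:{t0..t}|lborel. mu s)"
definition "R n t \<omega> = a t \<omega> - mu t - (\<Sum>j\<in>{j. j < n \<and> enat j < L}. sqrt (\<nu> j) * \<phi> j t * \<xi> j \<omega>)"

lemma a_meas[measurable]: "(\<lambda>(t,\<omega>). a t \<omega>) \<in> borel_measurable (Tm t0 T \<Otimes>\<^sub>M M)"
  using H1 by (simp add: sqint_def)

lemma a_sq: "integrable (Tm t0 T \<Otimes>\<^sub>M M) (\<lambda>(t,\<omega>). (a t \<omega>)^2)"
  using H1 by (simp add: sqint_def split_beta')

lemma fin_Tm: "finite_measure (Tm t0 T)" by (rule Tm_finite)

lemma fin_P: "finite_measure (Tm t0 T \<Otimes>\<^sub>M M)"
  by (rule finite_measure_pair_measure[OF _ fin_Tm]) (use prob in \<open>simp add: prob_space_def\<close>)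

lemma psf: "pair_sigma_finite (Tm t0 T) M"
  unfolding pair_sigma_finite_def
  using finite_measure.sigma_finite_measure[OF fin_Tm] prob_space_imp_sigma_finite[OF prob] by blast

lemma psf': "pair_sigma_finite M (Tm t0 T)"
  unfolding pair_sigma_finite_def
  using finite_measure.sigma_finite_measure[OF fin_Tm] prob_space_imp_sigma_finite[OF prob] by blast

lemma a_int: "integrable (Tm t0 T \<Otimes>\<^sub>M M) (\<lambda>(t,\<omega>). a t \<omega>)"
  using sq_integrable_imp_integrable[OF fin_P a_meas] a_sq by (simp add: split_beta')

lemma a_int_AE: "AE \<omega> in M. integrable (Tm t0 T) (\<lambda>t. a t \<omega>)"
proof -
  interpret P: pair_sigma_finite "Tm t0 T" M by (rule psf)
  interpret Q: pair_sigma_finite M "Tm t0 T" by (rule psf')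
  have "integrable (M \<Otimes>\<^sub>M Tm t0 T) (\<lambda>(\<omega>,t). a t \<omega>)"
    using P.integrable_product_swap[OF a_int] by (simp add: split_beta')
  from Q.AE_integrable_fst'[OF this] show ?thesis by simp
qed

lemma a_t_sq_AE: "AE t in Tm t0 T. integrable M (\<lambda>\<omega>. (a t \<omega>)^2)"
proof -
  interpret P: pair_sigma_finite "Tm t0 T" M by (rule psf)
  from P.AE_integrable_fst'[OF a_sq] show ?thesis by simp
qed

lemma mu_meas[measurable]: "mu \<in> borel_measurable (Tm t0 T)"
proof -
  interpret P: pair_sigma_finite "Tm t0 T" M by (rule psf)
  have "(\<lambda>t. \<integral>\<omega>. a t \<omega> \<partial>M) \<in> borel_measurable (Tm t0 T)"
    by (rule P.M2.borel_measurable_lebesgue_integral) (simp add: a_meas)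
  then show ?thesis by (simp add: mu_def mean_fun_def[abs_def])
qed

lemma mu_sqint: "sqint (Tm t0 T) mu"
proof -
  interpret P: pair_sigma_finite "Tm t0 T" M by (rule psf)
  interpret prob_space M by (rule prob)
  have i: "integrable (Tm t0 T) (\<lambda>t. \<integral>\<omega>. (a t \<omega>)^2 \<partial>M)"
    using P.integrable_fst'[OF a_sq] by simp
  have "AE t in Tm t0 T. norm ((mu t)^2) \<le> norm (\<integral>\<omega>. (a t \<omega>)^2 \<partial>M)"
    using a_t_sq_AE
  proof (rule AE_mp, intro AE_I2 impI)
    fix t assume t: "t \<in> space (Tm t0 T)" and it: "integrable M (\<lambda>\<omega>. (a t \<omega>)^2)"
    have am: "(\<lambda>\<omega>. a t \<omega>) \<in> borel_measurable M"
      using measurable_Pair2[OF a_meas t] by simp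
    have "(mu t)^2 \<le> measure M (space M) * (\<integral>\<omega>. (a t \<omega>)^2 \<partial>M)"
      unfolding mu_def mean_fun_def using cs_finite[OF finite_measure_axioms am it] by simp
    moreover have "measure M (space M) = 1" by (rule prob_space)
    ultimately show "norm ((mu t)^2) \<le> norm (\<integral>\<omega>. (a t \<omega>)^2 \<partial>M)" by simp
  qed
  then have "integrable (Tm t0 T) (\<lambda>t. (mu t)^2)"
    by (rule Bochner_Integration.integrable_bound[OF i, rotated]) measurable
  then show ?thesis by (simp add: sqint_def)
qed

lemma phi_sqint: "enat j < L \<Longrightarrow> sqint (Tm t0 T) (\<phi> j)"
  using KL_eig by blast

lemma xi_sqint: "enat j < L \<Longrightarrow> sqint M (\<xi> j)"
  using KL_xi by blast

lemma sqint_int_Tm: "sqint (Tm t0 T) f \<Longrightarrow> integrable (Tm t0 T) f"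
  unfolding sqint_def using sq_integrable_imp_integrable[OF fin_Tm, of f] by blast

lemma sqint_fst: "sqint (Tm t0 T) f \<Longrightarrow> sqint (Tm t0 T \<Otimes>\<^sub>M M) (\<lambda>(t,\<omega>). f t)"
proof -
  interpret P: pair_sigma_finite "Tm t0 T" M by (rule psf)
  interpret prob_space M by (rule prob)
  assume f: "sqint (Tm t0 T) f"
  then have [measurable]: "f \<in> borel_measurable (Tm t0 T)" by (simp add: sqint_def)
  have i2: "integrable (Tm t0 T) (\<lambda>t. (f t)^2)" using f by (simp add: sqint_def)
  have "integrable (Tm t0 T \<Otimes>\<^sub>M M) (\<lambda>x. (\<lambda>t. (f t)^2) (fst x) * (\<lambda>_. 1) (snd x))"
    by (rule P.integrable_prod_fun[OF i2]) simp
  then have "integrable (Tm t0 T \<Otimes>\<^sub>M M) (\<lambda>x. ((\<lambda>(t,\<omega>). f t) x)^2)"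
    by (simp add: split_beta')
  moreover have "(\<lambda>(t,\<omega>). f t) \<in> borel_measurable (Tm t0 T \<Otimes>\<^sub>M M)" by measurable
  ultimately show ?thesis unfolding sqint_def by blast
qed

lemma sqint_prod: "sqint (Tm t0 T) f \<Longrightarrow> sqint M g \<Longrightarrow> sqint (Tm t0 T \<Otimes>\<^sub>M M) (\<lambda>(t,\<omega>). f t * g \<omega>)"
proof -
  interpret P: pair_sigma_finite "Tm t0 T" M by (rule psf)
  assume f: "sqint (Tm t0 T) f" and g: "sqint M g"
  then have [measurable]: "f \<in> borel_measurable (Tm t0 T)" "g \<in> borel_measurable M" by (auto simp: sqint_def)
  have "integrable (Tm t0 T \<Otimes>\<^sub>M M) (\<lambda>x. (\<lambda>t. (f t)^2) (fst x) * (\<lambda>\<omega>. (g \<omega>)^2) (snd x))"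
    by (rule P.integrable_prod_fun) (use f g in \<open>simp_all add: sqint_def\<close>)
  then have "integrable (Tm t0 T \<Otimes>\<^sub>M M) (\<lambda>x. ((\<lambda>(t,\<omega>). f t * g \<omega>) x)^2)"
    by (simp add: split_beta' power_mult_distrib)
  moreover have "(\<lambda>(t,\<omega>). f t * g \<omega>) \<in> borel_measurable (Tm t0 T \<Otimes>\<^sub>M M)" by measurable
  ultimately show ?thesis unfolding sqint_def by blast
qed

lemma R_sqint: "sqint (Tm t0 T \<Otimes>\<^sub>M M) (\<lambda>(t,\<omega>). R n t \<omega>)"
proof -
  have s: "sqint (Tm t0 T \<Otimes>\<^sub>M M) (\<lambda>x. (\<lambda>(t,\<omega>). sqrt (\<nu> j) * (\<phi> j t * \<xi> j \<omega>)) x)"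
    if "j \<in> {j. j < n \<and> enat j < L}" for j
    using sqint_cmult[OF sqint_prod[OF phi_sqint xi_sqint], of j j "sqrt (\<nu> j)"] that
    by (simp add: split_beta')
  have "sqint (Tm t0 T \<Otimes>\<^sub>M M) (\<lambda>x. (\<lambda>(t,\<omega>). a t \<omega>) x - (\<lambda>(t,\<omega>). mu t) x
          - (\<Sum>j\<in>{j. j < n \<and> enat j < L}. (\<lambda>(t,\<omega>). sqrt (\<nu> j) * (\<phi> j t * \<xi> j \<omega>)) x))"
    using sqint_diff[OF sqint_diff[OF H1 sqint_fst[OF mu_sqint]] sqint_sum[of "{j. j < n \<and> enat j < L}", OF _ s]] by simp
  then show ?thesis unfolding R_def by (simp add: split_beta' mult.assoc)
qed

end

lemma trunc_le: "enat (trunc_idx L n) \<le> L"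
  by (cases L) (auto simp: trunc_idx_def)

lemma trunc_set: "{j. j < Suc n \<and> enat j < L} = {..<trunc_idx L n}"
  by (cases L) (auto simp: trunc_idx_def)

lemma trunc_lt: "j < trunc_idx L n \<Longrightarrow> enat j < L"
  using trunc_le[of L n] by (meson enat_ord_simps(2) order_less_le_trans)

lemma trunc_pos: "L \<noteq> 0 \<Longrightarrow> 1 \<le> trunc_idx L n"
  by (cases L) (auto simp: trunc_idx_def zero_enat_def)

lemma trunc_zero: "L = 0 \<Longrightarrow> trunc_idx L n = 0"
  by (auto simp: trunc_idx_def zero_enat_def)

lemma Tm_ind_int:
  fixes f :: "real \<Rightarrow> real"
  assumes "integrable (Tm t0 T) f"
  shows "integrable (Tm t0 T) (\<lambda>s. indicator {t0..t} s * f s)"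
proof (rule Bochner_Integration.integrable_bound[OF assms])
  show "(\<lambda>s. indicator {t0..t} s * f s) \<in> borel_measurable (Tm t0 T)"
    using borel_measurable_integrable[OF assms] by measurable
  show "AE x in Tm t0 T. norm (indicator {t0..t} x * f x) \<le> norm (f x)"
    by (intro AE_I2) (simp add: indicator_def)
qed

context thm7
begin

lemma phi_int: "enat j < L \<Longrightarrow> integrable (Tm t0 T) (\<phi> j)"
  by (rule sqint_int_Tm[OF phi_sqint])

lemma mu_int: "integrable (Tm t0 T) mu"
  by (rule sqint_int_Tm[OF mu_sqint])

lemma xi_meas: "enat j < L \<Longrightarrow> \<xi> j \<in> borel_measurable M"
  using xi_sqint[of j] by (simp add: sqint_def)

lemma c0_eq: "t0 \<le> t \<Longrightarrow> t \<le> T \<Longrightarrow> c0 t = integral\<^sup>L (Tm t0 T) (\<lambda>s. indicator {t0..t} s * mu s)"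
  unfolding c0_def by (rule Tm_set_integral)

lemma cc_eq: "t0 \<le> t \<Longrightarrow> t \<le> T \<Longrightarrow> cc t j = integral\<^sup>L (Tm t0 T) (\<lambda>s. indicator {t0..t} s * \<phi> j s)"
  unfolding cc_def by (rule Tm_set_integral)

lemma Ka_lin:
  assumes t: "t0 \<le> t" "t \<le> T" and N: "enat N \<le> L"
  shows "Ka mu \<nu> \<phi> t0 N t v = c0 t + (\<Sum>j<N. sqrt (\<nu> j) * cc t j * v j)"
proof -
  have jL: "j < N \<Longrightarrow> enat j < L" for j using N by (meson enat_ord_simps(2) order_less_le_trans)
  have "Ka mu \<nu> \<phi> t0 N t v
      = integral\<^sup>L (Tm t0 T) (\<lambda>s. indicator {t0..t} s * (mu s + (\<Sum>j<N. sqrt (\<nu> j) * \<phi> j s * v j)))"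
    unfolding Ka_def by (rule Tm_set_integral[OF t])
  also have "\<dots> = integral\<^sup>L (Tm t0 T) (\<lambda>s. indicator {t0..t} s * mu s
                   + (\<Sum>j<N. (sqrt (\<nu> j) * v j) * (indicator {t0..t} s * \<phi> j s)))"
    by (intro Bochner_Integration.integral_cong refl) (simp add: distrib_left sum_distrib_left mult_ac)
  also have "\<dots> = integral\<^sup>L (Tm t0 T) (\<lambda>s. indicator {t0..t} s * mu s)
                   + (\<Sum>j<N. (sqrt (\<nu> j) * v j) * integral\<^sup>L (Tm t0 T) (\<lambda>s. indicator {t0..t} s * \<phi> j s))"
  proof -
    have i1: "integrable (Tm t0 T) (\<lambda>s. indicator {t0..t} s * mu s)" by (rule Tm_ind_int[OF mu_int])
    have i2: "integrable (Tm t0 T) (\<lambda>s. (sqrt (\<nu> j) * v j) * (indicator {t0..t} s * \<phi> j s))"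
      if "j \<in> {..<N}" for j
      using Tm_ind_int[OF phi_int[OF jL]] that by simp
    have "integral\<^sup>L (Tm t0 T) (\<lambda>s. \<Sum>j<N. (sqrt (\<nu> j) * v j) * (indicator {t0..t} s * \<phi> j s))
        = (\<Sum>j<N. integral\<^sup>L (Tm t0 T) (\<lambda>s. (sqrt (\<nu> j) * v j) * (indicator {t0..t} s * \<phi> j s)))"
      by (rule Bochner_Integration.integral_sum[OF i2])
    moreover have "integrable (Tm t0 T) (\<lambda>s. \<Sum>j<N. (sqrt (\<nu> j) * v j) * (indicator {t0..t} s * \<phi> j s))"
      by (rule Bochner_Integration.integrable_sum) (rule i2)
    ultimately show ?thesis using i1 by simp
  qed
  also have "\<dots> = c0 t + (\<Sum>j<N. sqrt (\<nu> j) * cc t j * v j)"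
    by (simp add: c0_eq[OF t] cc_eq[OF t] mult_ac)
  finally show ?thesis .
qed

lemma KN_eq:
  assumes t: "t0 \<le> t" "t \<le> T"
  shows "KN t n \<omega> = c0 t + (\<Sum>j<tr n. sqrt (\<nu> j) * cc t j * \<xi> j \<omega>)"
  unfolding KN_def Ka_lin[OF t trunc_le[of L n, folded tr_def]]
  by (simp add: xivec_def)

lemma KN_meas:
  assumes t: "t0 \<le> t" "t \<le> T"
  shows "KN t n \<in> borel_measurable M"
proof -
  have [measurable]: "\<xi> j \<in> borel_measurable M" if "j \<in> {..<tr n}" for j
    using xi_meas trunc_lt that by (auto simp: tr_def)
  have "(\<lambda>\<omega>. c0 t + (\<Sum>j<tr n. sqrt (\<nu> j) * cc t j * \<xi> j \<omega>)) \<in> borel_measurable M"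
    by measurable
  moreover have "KN t n = (\<lambda>\<omega>. c0 t + (\<Sum>j<tr n. sqrt (\<nu> j) * cc t j * \<xi> j \<omega>))"
    by (rule ext) (rule KN_eq[OF t])
  ultimately show ?thesis by simp
qed

lemma Kf_eq:
  assumes t: "t0 \<le> t" "t \<le> T"
  shows "Kf t \<omega> = integral\<^sup>L (Tm t0 T) (\<lambda>s. indicator {t0..t} s * a s \<omega>)"
  unfolding Kf_def by (rule Tm_set_integral[OF t])

lemma Kf_meas:
  assumes t: "t0 \<le> t" "t \<le> T"
  shows "Kf t \<in> borel_measurable M"
proof -
  interpret Tf: finite_measure "Tm t0 T" by (rule fin_Tm)
  have m1: "(\<lambda>(s,\<omega>). indicator {t0..t} s * a s \<omega>) \<in> borel_measurable (Tm t0 T \<Otimes>\<^sub>M M)"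
    using a_meas by measurable
  have "(\<lambda>(\<omega>,s). indicator {t0..t} s * a s \<omega>) \<in> borel_measurable (M \<Otimes>\<^sub>M Tm t0 T)"
    using measurable_pair_swap[OF m1] by simp
  then have "(\<lambda>\<omega>. integral\<^sup>L (Tm t0 T) (\<lambda>s. indicator {t0..t} s * a s \<omega>)) \<in> borel_measurable M"
    by (rule Tf.borel_measurable_lebesgue_integral)
  moreover have "Kf t = (\<lambda>\<omega>. integral\<^sup>L (Tm t0 T) (\<lambda>s. indicator {t0..t} s * a s \<omega>))"
    by (rule ext) (rule Kf_eq[OF t])
  ultimately show ?thesis by simp
qed

end

context thm7
begin

lemma R_meas[measurable]: "(\<lambda>(t,\<omega>). R n t \<omega>) \<in> borel_measurable (Tm t0 T \<Otimes>\<^sub>M M)"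
  using R_sqint[of n] by (simp add: sqint_def)

lemma R2_int: "integrable (Tm t0 T \<Otimes>\<^sub>M M) (\<lambda>(t,\<omega>). (R n t \<omega>)^2)"
  using R_sqint[of n] by (simp add: sqint_def split_beta')

lemma R2_swap: "integrable (M \<Otimes>\<^sub>M Tm t0 T) (\<lambda>(\<omega>,t). (R n t \<omega>)^2)"
proof -
  interpret P: pair_sigma_finite "Tm t0 T" M by (rule psf)
  show ?thesis using P.integrable_product_swap[OF R2_int[of n]] by (simp add: split_beta')
qed

lemma R2_AE_int: "AE \<omega> in M. integrable (Tm t0 T) (\<lambda>s. (R n s \<omega>)^2)"
proof -
  interpret Q: pair_sigma_finite M "Tm t0 T" by (rule psf')
  show ?thesis using Q.AE_integrable_fst'[OF R2_swap[of n]] by simp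
qed

lemma Q_int: "integrable M (\<lambda>\<omega>. integral\<^sup>L (Tm t0 T) (\<lambda>s. (R n s \<omega>)^2))"
proof -
  interpret Q: pair_sigma_finite M "Tm t0 T" by (rule psf')
  show ?thesis using Q.integrable_fst'[OF R2_swap[of n]] by simp
qed

lemma Q_integral: "integral\<^sup>L M (\<lambda>\<omega>. integral\<^sup>L (Tm t0 T) (\<lambda>s. (R n s \<omega>)^2))
    = integral\<^sup>L (Tm t0 T \<Otimes>\<^sub>M M) (\<lambda>(t,\<omega>). (R n t \<omega>)^2)"
proof -
  interpret P: pair_sigma_finite "Tm t0 T" M by (rule psf)
  interpret Q: pair_sigma_finite M "Tm t0 T" by (rule psf')
  have "integral\<^sup>L M (\<lambda>\<omega>. integral\<^sup>L (Tm t0 T) (\<lambda>s. (R n s \<omega>)^2))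
      = integral\<^sup>L (M \<Otimes>\<^sub>M Tm t0 T) (\<lambda>(\<omega>,t). (R n t \<omega>)^2)"
    using Q.integral_fst'[OF R2_swap[of n]] by simp
  also have "\<dots> = integral\<^sup>L (Tm t0 T \<Otimes>\<^sub>M M) (\<lambda>(t,\<omega>). (R n t \<omega>)^2)"
  proof -
    have m: "(\<lambda>(t,\<omega>). (R n t \<omega>)^2) \<in> borel_measurable (Tm t0 T \<Otimes>\<^sub>M M)" by measurable
    show ?thesis using P.integral_product_swap[OF m] by (simp add: split_beta')
  qed
  finally show ?thesis .
qed

lemma diff_AE:
  assumes t: "t0 \<le> t" "t \<le> T"
  shows "AE \<omega> in M. Kf t \<omega> - KN t n \<omega> = integral\<^sup>L (Tm t0 T) (\<lambda>s. indicator {t0..t} s * R (Suc n) s \<omega>)"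
  using a_int_AE
proof eventually_elim
  case (elim \<omega>)
  have jL: "j \<in> {..<tr n} \<Longrightarrow> enat j < L" for j using trunc_lt by (auto simp: tr_def)
  have Rs: "R (Suc n) s \<omega> = a s \<omega> - mu s - (\<Sum>j<tr n. sqrt (\<nu> j) * \<phi> j s * \<xi> j \<omega>)" for s
    unfolding R_def trunc_set tr_def lessThan_def by simp
  have ia: "integrable (Tm t0 T) (\<lambda>s. indicator {t0..t} s * a s \<omega>)" by (rule Tm_ind_int[OF elim])
  have im: "integrable (Tm t0 T) (\<lambda>s. indicator {t0..t} s * mu s)" by (rule Tm_ind_int[OF mu_int])
  have ip: "integrable (Tm t0 T) (\<lambda>s. (sqrt (\<nu> j) * \<xi> j \<omega>) * (indicator {t0..t} s * \<phi> j s))"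
    if "j \<in> {..<tr n}" for j
    using Tm_ind_int[OF phi_int[OF jL[OF that]]] by simp
  have isum: "integrable (Tm t0 T) (\<lambda>s. \<Sum>j<tr n. (sqrt (\<nu> j) * \<xi> j \<omega>) * (indicator {t0..t} s * \<phi> j s))"
    by (rule Bochner_Integration.integrable_sum) (rule ip)
  have "integral\<^sup>L (Tm t0 T) (\<lambda>s. indicator {t0..t} s * R (Suc n) s \<omega>)
      = integral\<^sup>L (Tm t0 T) (\<lambda>s. indicator {t0..t} s * a s \<omega> - indicator {t0..t} s * mu s
           - (\<Sum>j<tr n. (sqrt (\<nu> j) * \<xi> j \<omega>) * (indicator {t0..t} s * \<phi> j s)))"
    by (intro Bochner_Integration.integral_cong refl)
       (simp add: Rs right_diff_distrib sum_distrib_left mult_ac)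
  also have "\<dots> = integral\<^sup>L (Tm t0 T) (\<lambda>s. indicator {t0..t} s * a s \<omega>)
      - integral\<^sup>L (Tm t0 T) (\<lambda>s. indicator {t0..t} s * mu s)
      - (\<Sum>j<tr n. (sqrt (\<nu> j) * \<xi> j \<omega>) * integral\<^sup>L (Tm t0 T) (\<lambda>s. indicator {t0..t} s * \<phi> j s))"
    using ia im isum Bochner_Integration.integral_sum[of "{..<tr n}", OF ip] by simp
  also have "\<dots> = Kf t \<omega> - KN t n \<omega>"
    by (simp add: Kf_eq[OF t] KN_eq[OF t] c0_eq[OF t] cc_eq[OF t] mult_ac)
  finally show ?case by simp
qed

lemma sq_AE:
  assumes t: "t0 \<le> t" "t \<le> T"
  shows "AE \<omega> in M. (KN t n \<omega> - Kf t \<omega>)^2 \<le> (T - t0) * integral\<^sup>L (Tm t0 T) (\<lambda>s. (R (Suc n) s \<omega>)^2)"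
  using diff_AE[OF t, of n] R2_AE_int[of "Suc n"] AE_space
proof eventually_elim
  case (elim \<omega>)
  have mR: "(\<lambda>s. R (Suc n) s \<omega>) \<in> borel_measurable (Tm t0 T)"
    using measurable_Pair1[OF R_meas[of "Suc n"] elim(3)] by simp
  have mIR: "(\<lambda>s. indicator {t0..t} s * R (Suc n) s \<omega>) \<in> borel_measurable (Tm t0 T)"
    using mR by measurable
  have b: "((indicator {t0..t} s :: real) * R (Suc n) s \<omega>)^2 \<le> (R (Suc n) s \<omega>)^2" for s
    by (simp add: indicator_def)
  have iIR: "integrable (Tm t0 T) (\<lambda>s. (indicator {t0..t} s * R (Suc n) s \<omega>)^2)"
  proof (rule Bochner_Integration.integrable_bound[OF elim(2)])
    show "(\<lambda>s. (indicator {t0..t} s * R (Suc n) s \<omega>)^2) \<in> borel_measurable (Tm t0 T)"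
      using mIR by measurable
    show "AE s in Tm t0 T. norm ((indicator {t0..t} s * R (Suc n) s \<omega>)^2) \<le> norm ((R (Suc n) s \<omega>)^2)"
      using b by (intro AE_I2) simp
  qed
  have "(KN t n \<omega> - Kf t \<omega>)^2 = (integral\<^sup>L (Tm t0 T) (\<lambda>s. indicator {t0..t} s * R (Suc n) s \<omega>))^2"
    using elim(1) by (simp add: power2_commute)
  also have "\<dots> \<le> measure (Tm t0 T) (space (Tm t0 T)) * integral\<^sup>L (Tm t0 T) (\<lambda>s. (indicator {t0..t} s * R (Suc n) s \<omega>)^2)"
    by (rule cs_finite[OF fin_Tm mIR iIR])
  also have "\<dots> \<le> (T - t0) * integral\<^sup>L (Tm t0 T) (\<lambda>s. (R (Suc n) s \<omega>)^2)"
  proof -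
    have "integral\<^sup>L (Tm t0 T) (\<lambda>s. (indicator {t0..t} s * R (Suc n) s \<omega>)^2) \<le> integral\<^sup>L (Tm t0 T) (\<lambda>s. (R (Suc n) s \<omega>)^2)"
      using iIR elim(2) b by (intro integral_mono) auto
    moreover have "measure (Tm t0 T) (space (Tm t0 T)) = T - t0" using tT by (simp add: Tm_measure)
    moreover have "0 \<le> T - t0" using tT by simp
    ultimately show ?thesis by (simp add: mult_left_mono)
  qed
  finally show ?case .
qed

lemma L2conv:
  assumes t: "t0 \<le> t" "t \<le> T"
  shows "integrable M (\<lambda>\<omega>. (KN t n \<omega> - Kf t \<omega>)^2)"
    and "(\<lambda>n. integral\<^sup>L M (\<lambda>\<omega>. (KN t n \<omega> - Kf t \<omega>)^2)) \<longlonglongrightarrow> 0"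
proof -
  have [measurable]: "KN t n \<in> borel_measurable M" "Kf t \<in> borel_measurable M" for n
    using KN_meas[OF t] Kf_meas[OF t] by auto
  have iQ: "integrable M (\<lambda>\<omega>. (T - t0) * integral\<^sup>L (Tm t0 T) (\<lambda>s. (R (Suc n) s \<omega>)^2))" for n
    using Q_int[of "Suc n"] by simp
  have iD: "integrable M (\<lambda>\<omega>. (KN t n \<omega> - Kf t \<omega>)^2)" for n
  proof (rule Bochner_Integration.integrable_bound[OF iQ[of n]])
    show "(\<lambda>\<omega>. (KN t n \<omega> - Kf t \<omega>)^2) \<in> borel_measurable M" by measurable
    show "AE \<omega> in M. norm ((KN t n \<omega> - Kf t \<omega>)^2) \<le> norm ((T - t0) * integral\<^sup>L (Tm t0 T) (\<lambda>s. (R (Suc n) s \<omega>)^2))"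
      using sq_AE[OF t, of n]
    proof eventually_elim
      case (elim \<omega>)
      have "(KN t n \<omega> - Kf t \<omega>)^2 \<le> \<bar>(T - t0) * integral\<^sup>L (Tm t0 T) (\<lambda>s. (R (Suc n) s \<omega>)^2)\<bar>"
        using elim by (rule order_trans) (rule abs_ge_self)
      then show ?case by simp
    qed
  qed
  then show "integrable M (\<lambda>\<omega>. (KN t n \<omega> - Kf t \<omega>)^2)" .
  have le: "integral\<^sup>L M (\<lambda>\<omega>. (KN t n \<omega> - Kf t \<omega>)^2)
      \<le> (T - t0) * integral\<^sup>L (Tm t0 T \<Otimes>\<^sub>M M) (\<lambda>(t,\<omega>). (R (Suc n) t \<omega>)^2)" for n
  proof -
    have "integral\<^sup>L M (\<lambda>\<omega>. (KN t n \<omega> - Kf t \<omega>)^2)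
        \<le> integral\<^sup>L M (\<lambda>\<omega>. (T - t0) * integral\<^sup>L (Tm t0 T) (\<lambda>s. (R (Suc n) s \<omega>)^2))"
      by (rule integral_mono_AE[OF iD iQ sq_AE[OF t]])
    also have "\<dots> = (T - t0) * integral\<^sup>L (Tm t0 T \<Otimes>\<^sub>M M) (\<lambda>(t,\<omega>). (R (Suc n) t \<omega>)^2)"
      by (simp add: Q_integral)
    finally show ?thesis .
  qed
  have ge: "0 \<le> integral\<^sup>L M (\<lambda>\<omega>. (KN t n \<omega> - Kf t \<omega>)^2)" for n
    by (rule integral_nonneg_AE) auto
  have "(\<lambda>n. integral\<^sup>L (Tm t0 T \<Otimes>\<^sub>M M) (\<lambda>(t,\<omega>). (R n t \<omega>)^2)) \<longlonglongrightarrow> 0"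
    using KL_conv by (simp add: R_def mu_def)
  then have "(\<lambda>n. integral\<^sup>L (Tm t0 T \<Otimes>\<^sub>M M) (\<lambda>(t,\<omega>). (R (Suc n) t \<omega>)^2)) \<longlonglongrightarrow> 0"
    by (rule LIMSEQ_Suc)
  then have "(\<lambda>n. (T - t0) * integral\<^sup>L (Tm t0 T \<Otimes>\<^sub>M M) (\<lambda>(t,\<omega>). (R (Suc n) t \<omega>)^2)) \<longlonglongrightarrow> (T - t0) * 0"
    by (intro tendsto_intros)
  then have lim0: "(\<lambda>n. (T - t0) * integral\<^sup>L (Tm t0 T \<Otimes>\<^sub>M M) (\<lambda>(t,\<omega>). (R (Suc n) t \<omega>)^2)) \<longlonglongrightarrow> 0"
    by simp
  show "(\<lambda>n. integral\<^sup>L M (\<lambda>\<omega>. (KN t n \<omega> - Kf t \<omega>)^2)) \<longlonglongrightarrow> 0"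
    by (rule tendsto_sandwich[OF always_eventually[OF allI[OF ge]] always_eventually[OF allI[OF le]] tendsto_const lim0])
qed

end

context thm7
begin

definition "g x k = f0 (x * exp (- k)) * exp (- k)"
definition "f1 x t = integral\<^sup>L M (\<lambda>\<omega>. g x (Kf t \<omega>))"

lemma f0_meas[measurable]: "f0 \<in> borel_measurable borel"
  using distributed_real_measurable[OF _ f0_dens] f0_nonneg by simp

lemma f0_bound: "\<exists>B. \<forall>y. \<bar>f0 y\<bar> \<le> B"
proof -
  obtain B where B: "\<And>y. y \<in> Dset M x0 \<Longrightarrow> norm (f0 y) \<le> B"
    using H3(2) unfolding bounded_iff by auto
  have "\<bar>f0 y\<bar> \<le> max B 0" for y
    using B[of y] f0_out[of y] by (cases "y \<in> Dset M x0") auto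
  then show ?thesis by blast
qed

lemma g_bound': assumes "\<And>y. \<bar>f0 y\<bar> \<le> B" shows "\<bar>g x k\<bar> \<le> B * exp (- k)"
  unfolding g_def using assms[of "x * exp (- k)"] by (simp add: abs_mult mult_right_mono)

lemma D_cases: "\<exists>P. \<forall>k. (x * exp (- k) \<in> Dset M x0) = P"
proof (cases "AE \<omega> in M. 0 < x0 \<omega>")
  case True
  then have "Dset M x0 = {0<..}" by (simp add: Dset_def)
  then show ?thesis by (intro exI[of _ "0 < x"]) (simp add: zero_less_mult_iff)
next
  case False
  show ?thesis
  proof (cases "AE \<omega> in M. x0 \<omega> < 0")
    case True
    then have "Dset M x0 = {..<0}" using False by (simp add: Dset_def)
    then show ?thesis by (intro exI[of _ "x < 0"]) (simp add: mult_less_0_iff)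
  next
    case False2: False
    then have "Dset M x0 = UNIV" using False by (simp add: Dset_def)
    then show ?thesis by (intro exI[of _ True]) simp
  qed
qed

lemma f0_comp_cont: "continuous_on UNIV (\<lambda>k. f0 (x * exp (- k)))"
proof -
  obtain P where P: "\<And>k. (x * exp (- k) \<in> Dset M x0) = P" using D_cases[of x] by blast
  show ?thesis
  proof (cases P)
    case True
    have c: "continuous_on UNIV (\<lambda>k. x * exp (- k))" by (intro continuous_intros)
    have img: "(\<lambda>k. x * exp (- k)) ` UNIV \<subseteq> Dset M x0" using True P by auto
    show ?thesis by (rule continuous_on_compose2[OF H3(1) c img])
  next
    case False
    have eq: "(\<lambda>k. f0 (x * exp (- k))) = (\<lambda>k. 0)" using f0_out P False by (intro ext) simp
    show ?thesis by (subst eq) (rule continuous_on_const)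
  qed
qed

lemma g_cont: "continuous_on UNIV (g x)"
  unfolding g_def[abs_def] by (intro continuous_intros f0_comp_cont)

lemma f1N_eq:
  assumes t: "t0 \<le> t" "t \<le> T"
  shows "f1N f0 (fxi (tr n)) mu \<nu> \<phi> t0 (tr n) x t = integral\<^sup>L M (\<lambda>\<omega>. g x (KN t n \<omega>))"
proof -
  define N where "N = tr n"
  have NL: "enat N \<le> L" unfolding N_def tr_def by (rule trunc_le)
  have gm[measurable]: "g x \<in> borel_measurable borel" by (rule borel_measurable_continuous_onI[OF g_cont])
  have jN: "j \<in> {..<N} \<Longrightarrow> (\<lambda>v. v j) \<in> borel_measurable (RN N)" for j
    unfolding RN_def using measurable_component_singleton[of j "{..<N}" "\<lambda>_. lborel"] by simp
  have "(\<lambda>v. g x (c0 t + (\<Sum>j<N. sqrt (\<nu> j) * cc t j * v j))) \<in> borel_measurable (RN N)"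
    using jN by measurable
  moreover have "(\<lambda>v. g x (Ka mu \<nu> \<phi> t0 N t v)) = (\<lambda>v. g x (c0 t + (\<Sum>j<N. sqrt (\<nu> j) * cc t j * v j)))"
    by (rule ext) (simp add: Ka_lin[OF t NL])
  ultimately have Gm: "(\<lambda>v. g x (Ka mu \<nu> \<phi> t0 N t v)) \<in> borel_measurable (RN N)" by simp
  have "f1N f0 (fxi N) mu \<nu> \<phi> t0 N x t = integral\<^sup>L (RN N) (\<lambda>v. fxi N v * g x (Ka mu \<nu> \<phi> t0 N t v))"
    unfolding f1N_def g_def by (simp add: mult_ac)
  also have "\<dots> = integral\<^sup>L M (\<lambda>\<omega>. g x (Ka mu \<nu> \<phi> t0 N t (xivec \<xi> N \<omega>)))"
    by (rule distributed_integral[OF fxi_dens[OF NL] Gm fxi_nonneg])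
  finally show ?thesis unfolding N_def KN_def .
qed

lemma exp_bound: "\<exists>C. \<forall>n. integrable M (\<lambda>\<omega>. (exp (- KN t n \<omega>))^2) \<and> integral\<^sup>L M (\<lambda>\<omega>. (exp (- KN t n \<omega>))^2) \<le> C"
  if t: "t0 \<le> t" "t \<le> T"
proof (cases "L = 0")
  case True
  interpret prob_space M by (rule prob)
  have "KN t n \<omega> = c0 t" for n \<omega>
    using KN_eq[OF t, of n \<omega>] trunc_zero[OF True] by (simp add: tr_def)
  then show ?thesis by (intro exI[of _ "(exp (- c0 t))^2"]) (simp add: prob_space)
next
  case False
  obtain C where C: "\<And>N t. 1 \<le> N \<Longrightarrow> enat N \<le> L \<Longrightarrow> t \<in> {t0..T} \<Longrightarrow>
       integrable M (\<lambda>\<omega>. (exp (- Ka (mean_fun M a) \<nu> \<phi> t0 N t (xivec \<xi> N \<omega>)))^2) \<and>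
       sqrt (integral\<^sup>L M (\<lambda>\<omega>. (exp (- Ka (mean_fun M a) \<nu> \<phi> t0 N t (xivec \<xi> N \<omega>)))^2)) \<le> C"
    using H4 by blast
  have "integrable M (\<lambda>\<omega>. (exp (- KN t n \<omega>))^2) \<and> integral\<^sup>L M (\<lambda>\<omega>. (exp (- KN t n \<omega>))^2) \<le> C^2" for n
  proof -
    have c: "integrable M (\<lambda>\<omega>. (exp (- KN t n \<omega>))^2) \<and> sqrt (integral\<^sup>L M (\<lambda>\<omega>. (exp (- KN t n \<omega>))^2)) \<le> C"
      using C[of "tr n" t] trunc_pos[OF False] trunc_le t by (simp add: KN_def mu_def tr_def)
    have "0 \<le> integral\<^sup>L M (\<lambda>\<omega>. (exp (- KN t n \<omega>))^2)" by (rule integral_nonneg_AE) auto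
    then have "integral\<^sup>L M (\<lambda>\<omega>. (exp (- KN t n \<omega>))^2) = (sqrt (integral\<^sup>L M (\<lambda>\<omega>. (exp (- KN t n \<omega>))^2)))^2"
      by simp
    also have "\<dots> \<le> C^2" using c by (intro power_mono) auto
    finally show ?thesis using c by blast
  qed
  then show ?thesis by blast
qed

lemma f1N_conv:
  assumes t: "t0 \<le> t" "t \<le> T"
  shows "(\<lambda>n. f1N f0 (fxi (tr n)) mu \<nu> \<phi> t0 (tr n) x t) \<longlonglongrightarrow> f1 x t"
proof -
  obtain B where B: "\<And>y. \<bar>f0 y\<bar> \<le> B" using f0_bound by blast
  obtain C where C: "\<And>n. integrable M (\<lambda>\<omega>. (exp (- KN t n \<omega>))^2)" "\<And>n. integral\<^sup>L M (\<lambda>\<omega>. (exp (- KN t n \<omega>))^2) \<le> C"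
    using exp_bound[OF t] by blast
  have "(\<lambda>n. integral\<^sup>L M (\<lambda>\<omega>. g x (KN t n \<omega>))) \<longlonglongrightarrow> integral\<^sup>L M (\<lambda>\<omega>. g x (Kf t \<omega>))"
    by (rule conv_L2[OF prob KN_meas[OF t] Kf_meas[OF t] L2conv(1)[OF t] L2conv(2)[OF t] C g_cont g_bound'[OF B]])
  then show ?thesis by (simp add: f1N_eq[OF t] f1_def)
qed

end

context thm7
begin

definition "GN N = {xivec \<xi> N -` B \<inter> space M | B. B \<in> sets (RN N)}"
definition "Gfam = (\<Union>N\<in>{N. 1 \<le> N \<and> enat N \<le> L}. GN N)"
definition "X0fam = {x0 -` A \<inter> space M | A. A \<in> sets borel}"
definition "Msig = sigma (space M) Gfam"

lemma xivec_meas: "enat N \<le> L \<Longrightarrow> xivec \<xi> N \<in> measurable M (RN N)"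
  using distributed_measurable[OF fxi_dens] by blast

lemma x0_meas[measurable]: "x0 \<in> borel_measurable M"
  using distributed_measurable[OF f0_dens] by simp

lemma xivec_space: "xivec \<xi> N \<omega> \<in> space (RN N)"
  by (simp add: RN_def space_PiM xivec_def)

lemma GN_events: "enat N \<le> L \<Longrightarrow> GN N \<subseteq> sets M"
  unfolding GN_def using measurable_sets[OF xivec_meas] by blast

lemma Gfam_events: "Gfam \<subseteq> sets M"
  unfolding Gfam_def using GN_events by blast

lemma Gfam_Pow: "Gfam \<subseteq> Pow (space M)"
  using Gfam_events sets.sets_into_space by blast

lemma GN_mono:
  assumes "N1 \<le> N2" shows "GN N1 \<subseteq> GN N2"
proof
  fix b assume "b \<in> GN N1"
  then obtain B where B: "B \<in> sets (RN N1)" "b = xivec \<xi> N1 -` B \<inter> space M"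
    unfolding GN_def by blast
  define B' where "B' = (\<lambda>f. restrict f {..<N1}) -` B \<inter> space (RN N2)"
  have "B' \<in> sets (RN N2)"
    unfolding B'_def RN_def
    using measurable_sets[OF measurable_restrict_subset[of "{..<N1}" "{..<N2}" "\<lambda>_. lborel"]] B(1) assms
    by (simp add: RN_def)
  moreover have "b = xivec \<xi> N2 -` B' \<inter> space M"
  proof -
    have "restrict (xivec \<xi> N2 \<omega>) {..<N1} = xivec \<xi> N1 \<omega>" for \<omega>
      using assms by (auto simp: xivec_def restrict_def fun_eq_iff)
    then show ?thesis unfolding B(2) B'_def using xivec_space[of N2] by auto
  qed
  ultimately show "b \<in> GN N2" unfolding GN_def by blast
qed

lemma GN_Int: "b1 \<in> GN N \<Longrightarrow> b2 \<in> GN N \<Longrightarrow> b1 \<inter> b2 \<in> GN N"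
proof -
  assume "b1 \<in> GN N" "b2 \<in> GN N"
  then obtain B1 B2 where B: "B1 \<in> sets (RN N)" "b1 = xivec \<xi> N -` B1 \<inter> space M"
    "B2 \<in> sets (RN N)" "b2 = xivec \<xi> N -` B2 \<inter> space M"
    unfolding GN_def by blast
  then have "b1 \<inter> b2 = xivec \<xi> N -` (B1 \<inter> B2) \<inter> space M" by auto
  moreover have "B1 \<inter> B2 \<in> sets (RN N)" using B by auto
  ultimately show ?thesis unfolding GN_def by blast
qed

lemma Gfam_Int_stable: "Int_stable Gfam"
proof (rule Int_stableI)
  fix b1 b2 assume "b1 \<in> Gfam" "b2 \<in> Gfam"
  then obtain N1 N2 where N: "1 \<le> N1" "enat N1 \<le> L" "b1 \<in> GN N1" "1 \<le> N2" "enat N2 \<le> L" "b2 \<in> GN N2"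
    unfolding Gfam_def by blast
  have "b1 \<in> GN (max N1 N2)" "b2 \<in> GN (max N1 N2)"
    using GN_mono[of N1 "max N1 N2"] GN_mono[of N2 "max N1 N2"] N by auto
  then have "b1 \<inter> b2 \<in> GN (max N1 N2)" by (rule GN_Int)
  moreover have "1 \<le> max N1 N2" "enat (max N1 N2) \<le> L" using N by (auto simp: max_def)
  ultimately show "b1 \<inter> b2 \<in> Gfam" unfolding Gfam_def by blast
qed

lemma X0fam_Int_stable: "Int_stable X0fam"
proof (rule Int_stableI)
  fix b1 b2 assume "b1 \<in> X0fam" "b2 \<in> X0fam"
  then obtain A1 A2 where A: "A1 \<in> sets borel" "b1 = x0 -` A1 \<inter> space M"
    "A2 \<in> sets borel" "b2 = x0 -` A2 \<inter> space M"
    unfolding X0fam_def by blast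
  then have "b1 \<inter> b2 = x0 -` (A1 \<inter> A2) \<inter> space M" by auto
  moreover have "A1 \<inter> A2 \<in> sets borel" using A by auto
  ultimately show "b1 \<inter> b2 \<in> X0fam" unfolding X0fam_def by blast
qed

lemma X0fam_events: "X0fam \<subseteq> sets M"
  unfolding X0fam_def using measurable_sets[OF x0_meas] by blast

lemma indep_gen: "prob_space.indep_set M X0fam Gfam"
proof -
  interpret prob_space M by (rule prob)
  show ?thesis
  proof (rule indep_setI[OF X0fam_events Gfam_events])
    fix a b assume a: "a \<in> X0fam" and b: "b \<in> Gfam"
    then obtain N where N: "1 \<le> N" "enat N \<le> L" "b \<in> GN N" unfolding Gfam_def by blast
    have "indep_set {x0 -` A \<inter> space M | A. A \<in> sets borel} {xivec \<xi> N -` B \<inter> space M | B. B \<in> sets (RN N)}"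
      using H2_indep[OF N(1,2)] .
    then show "prob (a \<inter> b) = prob a * prob b"
      using a N(3) by (intro indep_setD) (auto simp: X0fam_def GN_def)
  qed
qed

lemma indep_sig: "prob_space.indep_set M (sigma_sets (space M) X0fam) (sigma_sets (space M) Gfam)"
proof -
  interpret prob_space M by (rule prob)
  have "indep_sets (case_bool X0fam Gfam) UNIV" using indep_gen unfolding indep_set_def .
  then have "indep_sets (\<lambda>i. sigma_sets (space M) (case_bool X0fam Gfam i)) UNIV"
    by (rule indep_sets_sigma) (auto split: bool.split intro: X0fam_Int_stable Gfam_Int_stable)
  then show ?thesis unfolding indep_set_def
    by (rule indep_sets_mono_sets) (auto split: bool.split)
qed

lemma Msig_space: "space Msig = space M"
  unfolding Msig_def by (rule space_measure_of[OF Gfam_Pow])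

lemma Msig_sets: "sets Msig = sigma_sets (space M) Gfam"
  unfolding Msig_def by (rule sets_measure_of[OF Gfam_Pow])

lemma Msig_sub: "sets Msig \<subseteq> sets M"
  unfolding Msig_sets using sets.sigma_sets_subset[OF Gfam_events] .

lemma Msig_meas_M: "f \<in> measurable Msig N \<Longrightarrow> f \<in> measurable M N"
  using Msig_sub Msig_space unfolding measurable_def by auto

lemma indep_Msig:
  assumes f: "f \<in> borel_measurable Msig"
  shows "prob_space.indep_var M borel x0 borel f"
proof -
  interpret prob_space M by (rule prob)
  have fM: "f \<in> borel_measurable M" by (rule Msig_meas_M[OF f])
  have sub: "{f -` A \<inter> space M | A. A \<in> sets borel} \<subseteq> sigma_sets (space M) Gfam"
    using measurable_sets[OF f] Msig_space Msig_sets by auto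
  have "indep_set (sigma_sets (space M) X0fam) (sigma_sets (space M) {f -` A \<inter> space M | A. A \<in> sets borel})"
    using indep_sig sigma_sets_mono[OF sub] unfolding indep_set_def
    by (elim indep_sets_mono_sets) (auto split: bool.split)
  then show ?thesis unfolding indep_var_eq X0fam_def using fM by simp
qed

lemma xivec_Msig: "1 \<le> N \<Longrightarrow> enat N \<le> L \<Longrightarrow> xivec \<xi> N \<in> measurable Msig (RN N)"
proof (rule measurableI)
  fix \<omega> show "xivec \<xi> N \<omega> \<in> space (RN N)" by (rule xivec_space)
next
  fix B assume "1 \<le> N" "enat N \<le> L" "B \<in> sets (RN N)"
  then have "xivec \<xi> N -` B \<inter> space M \<in> Gfam" unfolding Gfam_def GN_def by blast
  then show "xivec \<xi> N -` B \<inter> space Msig \<in> sets Msig"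
    unfolding Msig_space Msig_sets by blast
qed

lemma xi_Msig: assumes "enat j < L" shows "\<xi> j \<in> borel_measurable Msig"
proof -
  have N: "1 \<le> Suc j" "enat (Suc j) \<le> L" using assms by (auto simp: Suc_ile_eq)
  have c: "(\<lambda>x. x j) \<in> measurable (PiM {..<Suc j} (\<lambda>_. lborel)) lborel"
    by (rule measurable_component_singleton) simp
  have "(\<lambda>\<omega>. xivec \<xi> (Suc j) \<omega> j) \<in> measurable Msig lborel"
    by (rule measurable_compose[OF xivec_Msig[OF N, unfolded RN_def] c])
  then have "(\<lambda>\<omega>. xivec \<xi> (Suc j) \<omega> j) \<in> borel_measurable Msig" by simp
  moreover have "(\<lambda>\<omega>. xivec \<xi> (Suc j) \<omega> j) = \<xi> j" by (rule ext) (simp add: xivec_def)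
  ultimately show ?thesis by simp
qed

lemma KN_Msig:
  assumes t: "t0 \<le> t" "t \<le> T"
  shows "KN t n \<in> borel_measurable Msig"
proof -
  have [measurable]: "\<xi> j \<in> borel_measurable Msig" if "j \<in> {..<tr n}" for j
    using xi_Msig trunc_lt that by (auto simp: tr_def)
  have "(\<lambda>\<omega>. c0 t + (\<Sum>j<tr n. sqrt (\<nu> j) * cc t j * \<xi> j \<omega>)) \<in> borel_measurable Msig"
    by measurable
  moreover have "KN t n = (\<lambda>\<omega>. c0 t + (\<Sum>j<tr n. sqrt (\<nu> j) * cc t j * \<xi> j \<omega>))"
    by (rule ext) (rule KN_eq[OF t])
  ultimately show ?thesis by simp
qed

end

lemma cov_exp:
  fixes f0 :: "real \<Rightarrow> real" and k :: real
  assumes [measurable]: "f0 \<in> borel_measurable borel" and A[measurable]: "A \<in> sets borel"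
  shows "(\<integral>\<^sup>+ y. ennreal (f0 y) * indicator A (y * exp k) \<partial>lborel)
       = (\<integral>\<^sup>+ z. ennreal (f0 (z * exp (- k)) * exp (- k)) * indicator A z \<partial>lborel)"
proof -
  define F where "F z = ennreal (f0 (z * exp (- k)) * exp (- k)) * indicator A z" for z
  have Fm[measurable]: "F \<in> borel_measurable borel" unfolding F_def by measurable
  have "(\<integral>\<^sup>+ z. F z \<partial>lborel) = ennreal \<bar>exp k\<bar> * (\<integral>\<^sup>+ x. F (0 + exp k * x) \<partial>lborel)"
    by (rule nn_integral_real_affine[OF Fm]) simp
  also have "\<dots> = (\<integral>\<^sup>+ x. ennreal (exp k) * F (exp k * x) \<partial>lborel)"
    by (subst nn_integral_cmult) auto
  also have "\<dots> = (\<integral>\<^sup>+ y. ennreal (f0 y) * indicator A (y * exp k) \<partial>lborel)"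
  proof (intro nn_integral_cong)
    fix x :: real
    have "exp k * (f0 x * exp (- k)) = f0 x * (exp k * exp (- k))" by (simp add: mult_ac)
    also have "\<dots> = f0 x" by (simp add: exp_minus_inverse)
    finally have eq: "exp k * (f0 x * exp (- k)) = f0 x" .
    have "ennreal (exp k) * ennreal (f0 x * exp (- k)) = ennreal (exp k * (f0 x * exp (- k)))"
      by (rule ennreal_mult'[symmetric]) simp
    then have "ennreal (exp k) * ennreal (f0 x * exp (- k)) = ennreal (f0 x)" by (simp only: eq)
    note e1 = this
    have xe: "exp k * x * exp (- k) = x" by (simp add: mult.commute[of "exp k"] mult.assoc exp_minus_inverse)
    have xc: "exp k * x = x * exp k" by (rule mult.commute)
    have "F (exp k * x) = ennreal (f0 x * exp (- k)) * indicator A (x * exp k)"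
      unfolding F_def xe by (simp only: xc)
    then show "ennreal (exp k) * F (exp k * x) = ennreal (f0 x) * indicator A (x * exp k)"
      by (simp only: mult.assoc[symmetric] e1)
  qed
  finally show ?thesis unfolding F_def by simp
qed

context thm7
begin

lemma Kprime:
  assumes t: "t0 \<le> t" "t \<le> T"
  shows "\<exists>K'. K' \<in> borel_measurable Msig \<and> (AE \<omega> in M. K' \<omega> = Kf t \<omega>)
           \<and> integrable M (\<lambda>\<omega>. (exp (- Kf t \<omega>))^2)"
proof -
  obtain r where r: "strict_mono r" "AE \<omega> in M. (\<lambda>n. KN t (r n) \<omega>) \<longlonglongrightarrow> Kf t \<omega>"
    using ae_subseq[OF KN_meas[OF t] Kf_meas[OF t] L2conv(1)[OF t] L2conv(2)[OF t]] by blast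
  obtain C where C: "\<And>n. integrable M (\<lambda>\<omega>. (exp (- KN t n \<omega>))^2)" "\<And>n. integral\<^sup>L M (\<lambda>\<omega>. (exp (- KN t n \<omega>))^2) \<le> C"
    using exp_bound[OF t] by blast
  have ie: "integrable M (\<lambda>\<omega>. (exp (- Kf t \<omega>))^2)"
    using fatou_exp[of "\<lambda>n. KN t (r n)" M "Kf t", OF KN_meas[OF t] Kf_meas[OF t] r(2) C(1) C(2)] by blast
  define K' where "K' \<omega> = lim (\<lambda>n. KN t (r n) \<omega>)" for \<omega>
  have "K' \<in> borel_measurable Msig"
    unfolding K'_def by (rule borel_measurable_lim_metric) (rule KN_Msig[OF t])
  moreover have "AE \<omega> in M. K' \<omega> = Kf t \<omega>"
    using r(2) by eventually_elim (simp add: K'_def limI)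
  ultimately show ?thesis using ie by blast
qed

lemma f1_meas: "(\<lambda>y. f1 y t) \<in> borel_measurable borel" if t: "t0 \<le> t" "t \<le> T"
proof -
  interpret prob_space M by (rule prob)
  have [measurable]: "Kf t \<in> borel_measurable M" by (rule Kf_meas[OF t])
  have "(\<lambda>(y, \<omega>). g y (Kf t \<omega>)) \<in> borel_measurable (borel \<Otimes>\<^sub>M M)"
    unfolding g_def by measurable
  then have "(\<lambda>y. \<integral>\<omega>. g y (Kf t \<omega>) \<partial>M) \<in> borel_measurable borel"
    by (rule borel_measurable_lebesgue_integral)
  then show ?thesis by (simp add: f1_def[abs_def])
qed

lemma g_nonneg: "0 \<le> g x k" unfolding g_def using f0_nonneg by simp

lemma dens:
  assumes t: "t0 \<le> t" "t \<le> T"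
  shows "distributed M lborel (\<lambda>\<omega>. x0 \<omega> * exp (LINT s:{t0..t}|lborel. a s \<omega>)) (\<lambda>y. ennreal (f1 y t))"
proof -
  interpret prob_space M by (rule prob)
  obtain K' where K'm: "K' \<in> borel_measurable Msig" and K'ae: "AE \<omega> in M. K' \<omega> = Kf t \<omega>"
    and ie: "integrable M (\<lambda>\<omega>. (exp (- Kf t \<omega>))^2)"
    using Kprime[OF t] by blast
  have K'M[measurable]: "K' \<in> borel_measurable M" by (rule Msig_meas_M[OF K'm])
  have KfM[measurable]: "Kf t \<in> borel_measurable M" by (rule Kf_meas[OF t])
  obtain B where B: "\<And>y. \<bar>f0 y\<bar> \<le> B" using f0_bound by blast
  have gm[measurable]: "g z \<in> borel_measurable borel" for z by (rule borel_measurable_continuous_onI[OF g_cont])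
  have X_eq: "(\<lambda>\<omega>. x0 \<omega> * exp (LINT s:{t0..t}|lborel. a s \<omega>)) = (\<lambda>\<omega>. x0 \<omega> * exp (Kf t \<omega>))"
    by (simp add: Kf_def)
  have ind: "indep_var borel x0 borel K'" by (rule indep_Msig[OF K'm])
  have joint: "distr M borel x0 \<Otimes>\<^sub>M distr M borel K' = distr M (borel \<Otimes>\<^sub>M borel) (\<lambda>\<omega>. (x0 \<omega>, K' \<omega>))"
    using ind unfolding indep_var_distribution_eq by blast
  define D0 where "D0 = distr M borel x0"
  define DK where "DK = distr M borel K'"
  have pD0: "prob_space D0" unfolding D0_def by (rule prob_space_distr) simp
  have pDK: "prob_space DK" unfolding DK_def by (rule prob_space_distr) simp
  interpret PD: pair_sigma_finite D0 DK
    unfolding pair_sigma_finite_def using prob_space_imp_sigma_finite[OF pD0] prob_space_imp_sigma_finite[OF pDK] by blast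
  interpret PL: pair_sigma_finite lborel DK
    unfolding pair_sigma_finite_def using prob_space_imp_sigma_finite[OF pDK] lborel.sigma_finite_measure_axioms by blast
  have sD0: "sets D0 = sets borel" unfolding D0_def by simp
  have sDK: "sets DK = sets borel" unfolding DK_def by simp
  have gint: "integrable M (\<lambda>\<omega>. g z (Kf t \<omega>))" for z
    by (rule integrable_g_exp[OF finite_measure_axioms KfM gm ie g_bound'[OF B]])
  have f1nn: "(\<integral>\<^sup>+ k. ennreal (g z k) \<partial>DK) = ennreal (f1 z t)" for z
  proof -
    have "(\<integral>\<^sup>+ k. ennreal (g z k) \<partial>DK) = (\<integral>\<^sup>+ \<omega>. ennreal (g z (K' \<omega>)) \<partial>M)"
      unfolding DK_def by (rule nn_integral_distr) auto
    also have "\<dots> = (\<integral>\<^sup>+ \<omega>. ennreal (g z (Kf t \<omega>)) \<partial>M)"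
      using K'ae by (intro nn_integral_cong_AE) auto
    also have "\<dots> = ennreal (integral\<^sup>L M (\<lambda>\<omega>. g z (Kf t \<omega>)))"
      by (rule nn_integral_eq_integral[OF gint]) (simp add: g_nonneg)
    finally show ?thesis by (simp add: f1_def)
  qed
  have inner: "(\<integral>\<^sup>+ y. indicator A (y * exp k) \<partial>D0) = (\<integral>\<^sup>+ z. ennreal (g z k) * indicator A z \<partial>lborel)"
    if A[measurable]: "A \<in> sets borel" for A k
  proof -
    have "(\<integral>\<^sup>+ y. indicator A (y * exp k) \<partial>D0) = (\<integral>\<^sup>+ \<omega>. indicator A (x0 \<omega> * exp k) \<partial>M)"
      unfolding D0_def by (rule nn_integral_distr) auto
    also have "\<dots> = (\<integral>\<^sup>+ y. ennreal (f0 y) * indicator A (y * exp k) \<partial>lborel)"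
      by (rule distributed_nn_integral[OF f0_dens, symmetric]) simp
    also have "\<dots> = (\<integral>\<^sup>+ z. ennreal (g z k) * indicator A z \<partial>lborel)"
      unfolding g_def by (rule cov_exp[OF f0_meas A])
    finally show ?thesis .
  qed
  show ?thesis unfolding X_eq distributed_def
  proof (intro conjI)
    show "(\<lambda>y. ennreal (f1 y t)) \<in> borel_measurable lborel" using f1_meas[OF t] by simp
    show "(\<lambda>\<omega>. x0 \<omega> * exp (Kf t \<omega>)) \<in> measurable M lborel" by simp
    show "distr M lborel (\<lambda>\<omega>. x0 \<omega> * exp (Kf t \<omega>)) = density lborel (\<lambda>y. ennreal (f1 y t))"
    proof (rule measure_eqI)
      show "sets (distr M lborel (\<lambda>\<omega>. x0 \<omega> * exp (Kf t \<omega>))) = sets (density lborel (\<lambda>y. ennreal (f1 y t)))"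
        by simp
      fix A assume "A \<in> sets (distr M lborel (\<lambda>\<omega>. x0 \<omega> * exp (Kf t \<omega>)))"
      then have A[measurable]: "A \<in> sets borel" by simp
      have hm: "(\<lambda>p. indicator A (fst p * exp (snd p)) :: ennreal) \<in> borel_measurable (borel \<Otimes>\<^sub>M borel)"
        by measurable
      have hm': "(\<lambda>p. indicator A (fst p * exp (snd p)) :: ennreal) \<in> borel_measurable (D0 \<Otimes>\<^sub>M DK)"
        using hm measurable_cong_sets[OF sets_pair_measure_cong[OF sD0 sDK] refl] by blast
      have Fm: "(\<lambda>(z,k). ennreal (g z k) * indicator A z) \<in> borel_measurable (lborel \<Otimes>\<^sub>M DK)"
      proof -
        have "(\<lambda>(z,k). ennreal (g z k) * indicator A z) \<in> borel_measurable (borel \<Otimes>\<^sub>M borel)"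
          unfolding g_def by measurable
        then show ?thesis
          using measurable_cong_sets[OF sets_pair_measure_cong[OF sets_lborel sDK] refl] by blast
      qed
      have "emeasure (distr M lborel (\<lambda>\<omega>. x0 \<omega> * exp (Kf t \<omega>))) A
          = (\<integral>\<^sup>+ y. indicator A y \<partial>distr M lborel (\<lambda>\<omega>. x0 \<omega> * exp (Kf t \<omega>)))"
        by (rule nn_integral_indicator[symmetric]) simp
      also have "\<dots> = (\<integral>\<^sup>+ \<omega>. indicator A (x0 \<omega> * exp (Kf t \<omega>)) \<partial>M)"
        by (rule nn_integral_distr) auto
      also have "\<dots> = (\<integral>\<^sup>+ \<omega>. indicator A (x0 \<omega> * exp (K' \<omega>)) \<partial>M)"
        using K'ae by (intro nn_integral_cong_AE) auto
      also have "\<dots> = (\<integral>\<^sup>+ p. indicator A (fst p * exp (snd p)) \<partial>distr M (borel \<Otimes>\<^sub>M borel) (\<lambda>\<omega>. (x0 \<omega>, K' \<omega>)))"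
        using nn_integral_distr[of "\<lambda>\<omega>. (x0 \<omega>, K' \<omega>)" M "borel \<Otimes>\<^sub>M borel" "\<lambda>p. indicator A (fst p * exp (snd p))"] hm
        by simp
      also have "\<dots> = (\<integral>\<^sup>+ p. indicator A (fst p * exp (snd p)) \<partial>(D0 \<Otimes>\<^sub>M DK))"
        unfolding D0_def DK_def joint ..
      also have "\<dots> = (\<integral>\<^sup>+ k. (\<integral>\<^sup>+ y. indicator A (y * exp k) \<partial>D0) \<partial>DK)"
        using PD.nn_integral_snd[OF hm'] by simp
      also have "\<dots> = (\<integral>\<^sup>+ k. (\<integral>\<^sup>+ z. ennreal (g z k) * indicator A z \<partial>lborel) \<partial>DK)"
        by (intro nn_integral_cong) (rule inner[OF A])
      also have "\<dots> = (\<integral>\<^sup>+ z. (\<integral>\<^sup>+ k. ennreal (g z k) * indicator A z \<partial>DK) \<partial>lborel)"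
        by (rule PL.Fubini'[OF Fm])
      also have "\<dots> = (\<integral>\<^sup>+ z. ennreal (f1 z t) * indicator A z \<partial>lborel)"
      proof (intro nn_integral_cong)
        fix z :: real
        have "(\<integral>\<^sup>+ k. ennreal (g z k) * indicator A z \<partial>DK) = (\<integral>\<^sup>+ k. ennreal (g z k) \<partial>DK) * indicator A z"
          by (rule nn_integral_multc) (simp add: sDK measurable_cong_sets[OF sDK refl])
        then show "(\<integral>\<^sup>+ k. ennreal (g z k) * indicator A z \<partial>DK) = ennreal (f1 z t) * indicator A z"
          by (simp add: f1nn)
      qed
      also have "\<dots> = emeasure (density lborel (\<lambda>y. ennreal (f1 y t))) A"
        by (rule emeasure_density[symmetric]) (use f1_meas[OF t] in simp_all)
      finally show "emeasure (distr M lborel (\<lambda>\<omega>. x0 \<omega> * exp (Kf t \<omega>))) A = emeasure (density lborel (\<lambda>y. ennreal (f1 y t))) A" .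
    qed
  qed
qed

end

theorem theorem7:
  fixes M :: "'a measure" and t0 T :: real and x0 :: "'a \<Rightarrow> real"
    and a :: "real \<Rightarrow> 'a \<Rightarrow> real"
    and L :: enat and \<nu> :: "nat \<Rightarrow> real" and \<phi> :: "nat \<Rightarrow> real \<Rightarrow> real"
    and \<xi> :: "nat \<Rightarrow> 'a \<Rightarrow> real"
    and f0 :: "real \<Rightarrow> real" and fxi :: "nat \<Rightarrow> (nat \<Rightarrow> real) \<Rightarrow> real"
  assumes prob: "prob_space M" and compl: "complete_measure M"
    and tT: "t0 < T"
    \<comment> \<open>(H1)\<close>
    and H1: "sqint (Tm t0 T \<Otimes>\<^sub>M M) (\<lambda>(t, \<omega>). a t \<omega>)"
    \<comment> \<open>Karhunen-Loeve data: the nonzero eigenpairs, indexed by j < L\<close>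
    and KL_eig: "\<And>j. enat j < L \<Longrightarrow> sqint (Tm t0 T) (\<phi> j) \<and> 0 < \<nu> j \<and>
                    (AE t in Tm t0 T. cov_op M a t0 T (\<phi> j) t = \<nu> j * \<phi> j t)"
    and KL_orth: "\<And>i j. enat i < L \<Longrightarrow> enat j < L \<Longrightarrow>
                    integral\<^sup>L (Tm t0 T) (\<lambda>t. \<phi> i t * \<phi> j t) = (if i = j then 1 else 0)"
    and KL_compl: "\<And>f. sqint (Tm t0 T) f \<Longrightarrow>
                    (\<forall>j. enat j < L \<longrightarrow> integral\<^sup>L (Tm t0 T) (\<lambda>t. f t * \<phi> j t) = 0) \<Longrightarrow>
                    (AE t in Tm t0 T. cov_op M a t0 T f t = 0)"
    and KL_xi: "\<And>j. enat j < L \<Longrightarrow> sqint M (\<xi> j) \<and> integral\<^sup>L M (\<xi> j) = 0 \<and>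
                    integral\<^sup>L M (\<lambda>\<omega>. (\<xi> j \<omega>)^2) = 1"
    and KL_uncorr: "\<And>i j. enat i < L \<Longrightarrow> enat j < L \<Longrightarrow> i \<noteq> j \<Longrightarrow>
                    integral\<^sup>L M (\<lambda>\<omega>. \<xi> i \<omega> * \<xi> j \<omega>) = 0"
    and KL_conv: "(\<lambda>n. integral\<^sup>L (Tm t0 T \<Otimes>\<^sub>M M)
                    (\<lambda>(t, \<omega>). (a t \<omega> - mean_fun M a t
                       - (\<Sum>j\<in>{j. j < n \<and> enat j < L}. sqrt (\<nu> j) * \<phi> j t * \<xi> j \<omega>))^2))
                  \<longlonglongrightarrow> 0"
    \<comment> \<open>(H2): absolute continuity (via densities) and independence\<close>
    and f0_dens: "distributed M lborel x0 (\<lambda>y. ennreal (f0 y))"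
    and f0_nonneg: "\<And>y. 0 \<le> f0 y"
    and f0_out: "\<And>y. y \<notin> Dset M x0 \<Longrightarrow> f0 y = 0"
    and fxi_dens: "\<And>N. enat N \<le> L \<Longrightarrow>
                    distributed M (RN N) (xivec \<xi> N) (\<lambda>v. ennreal (fxi N v))"
    and fxi_nonneg: "\<And>N v. 0 \<le> fxi N v"
    and H2_indep: "\<And>N. 1 \<le> N \<Longrightarrow> enat N \<le> L \<Longrightarrow>
                    prob_space.indep_set M {x0 -` A \<inter> space M | A. A \<in> sets borel}
                      {xivec \<xi> N -` B \<inter> space M | B. B \<in> sets (RN N)}"
    \<comment> \<open>(H3)\<close>
    and H3: "continuous_on (Dset M x0) f0" "bounded (f0 ` Dset M x0)"
    \<comment> \<open>(H4)\<close>
    and H4: "\<exists>C. \<forall>N t. 1 \<le> N \<longrightarrow> enat N \<le> L \<longrightarrow> t \<in> {t0..T} \<longrightarrow>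
               integrable M (\<lambda>\<omega>. (exp (- Ka (mean_fun M a) \<nu> \<phi> t0 N t (xivec \<xi> N \<omega>)))^2) \<and>
               sqrt (integral\<^sup>L M (\<lambda>\<omega>. (exp (- Ka (mean_fun M a) \<nu> \<phi> t0 N t (xivec \<xi> N \<omega>)))^2)) \<le> C"
  shows "\<exists>f1 :: real \<Rightarrow> real \<Rightarrow> real.
           (\<forall>t\<in>{t0..T}. distributed M lborel
               (\<lambda>\<omega>. x0 \<omega> * exp (LINT s:{t0..t}|lborel. a s \<omega>)) (\<lambda>y. ennreal (f1 y t))) \<and>
           (\<forall>x. \<forall>t\<in>{t0..T}.
               (\<lambda>n. f1N f0 (fxi (trunc_idx L n)) (mean_fun M a) \<nu> \<phi> t0 (trunc_idx L n) x t)
                 \<longlonglongrightarrow> f1 x t)"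
  proof -
  interpret thm7 M t0 T x0 a L \<nu> \<phi> \<xi> f0 fxi
    by (rule thm7.intro[OF assms])
  show ?thesis
  proof (intro exI[of _ f1] conjI ballI allI)
    fix t :: real assume t: "t \<in> {t0..T}"
    show "distributed M lborel (\<lambda>\<omega>. x0 \<omega> * exp (LINT s:{t0..t}|lborel. a s \<omega>)) (\<lambda>y. ennreal (f1 y t))"
      using t by (intro dens) auto
  next
    fix x t :: real assume t: "t \<in> {t0..T}"
    show "(\<lambda>n. f1N f0 (fxi (trunc_idx L n)) (mean_fun M a) \<nu> \<phi> t0 (trunc_idx L n) x t) \<longlonglongrightarrow> f1 x t"
      using f1N_conv[of t x] t by (simp add: tr_def mu_def)
  qed
qed

end
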